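(* Let $F\in\mathbb{C}[x,y,z]$ be an irreducible polynomial such that none of its three first-order partial derivatives is identically zero, and let $V$ be as below. For $i=1,2,3$ let \[ V_i=\{(x,x',y,y',z_1,z_2,z_3,z_4)\in V: F_i(x,y,z_1)F_i(x,y',z_2)F_i(x',y,z_3)F_i(x',y',z_4)=0\}, \] and $V_0=V_1\cup V_2\cup V_3$. Let $\rho:\mathbb{C}^8\to\mathbb{C}^6$ be $\rho(x,x',y,y',z_1,z_2,z_3,z_4)=(x,y,z_1,x',y',z_4)$. Then $\mathrm{cl}(\rho(V_0))$ has dimension at most $3$.
   Context: $V=\{(x,x',y,y',z_1,z_2,z_3,z_4)\in\mathbb{C}^8: F(x,y,z_1)=F(x,y',z_2)=F(x',y,z_3)=F(x',y',z_4)=0\}$. $F_i$ denotes the partial derivative of $F$ with respect to its $i$-th variable. $\mathrm{cl}$ denotes Zariski closure. *)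

theory Defs
  imports "HOL-Computational_Algebra.Polynomial" "HOL-Library.Extended_Nat"
begin

text \<open>A polynomial F in C[x,y,z] is represented as an element of
  complex poly poly poly: the outermost variable is z, the middle one y,
  the innermost one x.\<close>

definition eval3 :: "complex poly poly poly \<Rightarrow> complex \<Rightarrow> complex \<Rightarrow> complex \<Rightarrow> complex" where
  "eval3 F x y z = poly (poly (poly F [:[:z:]:]) [:y:]) x"

text \<open>Partial derivatives with respect to x (1st), y (2nd), z (3rd variable).\<close>
definition pd1 :: "complex poly poly poly \<Rightarrow> complex poly poly poly" where
  "pd1 F = map_poly (map_poly pderiv) F"

definition pd2 :: "complex poly poly poly \<Rightarrow> complex poly poly poly" where
  "pd2 F = map_poly pderiv F"

definition pd3 :: "complex poly poly poly \<Rightarrow> complex poly poly poly" where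
  "pd3 F = pderiv F"

definition V :: "complex poly poly poly \<Rightarrow> complex list set" where
  "V F = {[x, x', y, y', z1, z2, z3, z4] | x x' y y' z1 z2 z3 z4.
            eval3 F x y z1 = 0 \<and> eval3 F x y' z2 = 0 \<and>
            eval3 F x' y z3 = 0 \<and> eval3 F x' y' z4 = 0}"

definition Vi :: "complex poly poly poly \<Rightarrow> complex poly poly poly \<Rightarrow> complex list set" where
  "Vi F G = {[x, x', y, y', z1, z2, z3, z4] | x x' y y' z1 z2 z3 z4.
            [x, x', y, y', z1, z2, z3, z4] \<in> V F \<and>
            eval3 G x y z1 * eval3 G x y' z2 * eval3 G x' y z3 * eval3 G x' y' z4 = 0}"

definition V0 :: "complex poly poly poly \<Rightarrow> complex list set" where
  "V0 F = Vi F (pd1 F) \<union> Vi F (pd2 F) \<union> Vi F (pd3 F)"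

definition rho :: "complex list \<Rightarrow> complex list" where
  "rho v = [v!0, v!2, v!4, v!1, v!3, v!7]"

inductive poly_fun :: "nat \<Rightarrow> (complex list \<Rightarrow> complex) \<Rightarrow> bool" for n where
  pf_const: "poly_fun n (\<lambda>v. c)"
| pf_var: "i < n \<Longrightarrow> poly_fun n (\<lambda>v. v ! i)"
| pf_add: "poly_fun n p \<Longrightarrow> poly_fun n q \<Longrightarrow> poly_fun n (\<lambda>v. p v + q v)"
| pf_mult: "poly_fun n p \<Longrightarrow> poly_fun n q \<Longrightarrow> poly_fun n (\<lambda>v. p v * q v)"

definition zariski_closed :: "nat \<Rightarrow> complex list set \<Rightarrow> bool" where
  "zariski_closed n S \<longleftrightarrow>
     (\<exists>P. (\<forall>p\<in>P. poly_fun n p) \<and> S = {v. length v = n \<and> (\<forall>p\<in>P. p v = 0)})"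

definition zariski_closure :: "nat \<Rightarrow> complex list set \<Rightarrow> complex list set" where
  "zariski_closure n S = \<Inter>{T. zariski_closed n T \<and> S \<subseteq> T}"

definition zariski_irreducible :: "nat \<Rightarrow> complex list set \<Rightarrow> bool" where
  "zariski_irreducible n Z \<longleftrightarrow> zariski_closed n Z \<and> Z \<noteq> {} \<and>
     (\<forall>A B. zariski_closed n A \<longrightarrow> zariski_closed n B \<longrightarrow> Z \<subseteq> A \<union> B \<longrightarrow> Z \<subseteq> A \<or> Z \<subseteq> B)"

text \<open>Dimension (Krull dimension of the Zariski topology): supremum of lengths k
  of chains Z_0 < Z_1 < ... < Z_k of irreducible closed subsets of S.
  (The empty set gets dimension 0 rather than -1; irrelevant for upper bounds.)\<close>
definition zariski_dim :: "nat \<Rightarrow> complex list set \<Rightarrow> enat" where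
  "zariski_dim n S = Sup {enat k | k. \<exists>Z :: nat \<Rightarrow> complex list set.
      (\<forall>i\<le>k. zariski_irreducible n (Z i) \<and> Z i \<subseteq> S) \<and> (\<forall>i<k. Z i \<subset> Z (Suc i))}"

end

theory Submission imports Defs "HOL-Computational_Algebra.Computational_Algebra" "HOL-Computational_Algebra.Field_as_Ring" begin

lemma lin_dep:
  fixes M :: "'i \<Rightarrow> 'b \<Rightarrow> complex"
  assumes "finite B" "finite I" "card B < card I"
  shows "\<exists>l. (\<exists>i\<in>I. l i \<noteq> 0) \<and> (\<forall>b\<in>B. (\<Sum>i\<in>I. l i * M i b) = 0)"
  using assms
proof (induction B arbitrary: I M rule: finite_induct)
  case empty
  then obtain i where "i \<in> I" by fastforce
  then show ?case by (intro exI[of _ "\<lambda>_. 1"]) auto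
next
  case (insert b B)
  show ?case
  proof (cases "\<forall>i\<in>I. M i b = 0")
    case True
    have "card B < card I" using insert.prems insert.hyps by auto
    from insert.IH[OF insert.prems(1) this, of M] obtain l where
      "(\<exists>i\<in>I. l i \<noteq> 0)" "\<forall>b\<in>B. (\<Sum>i\<in>I. l i * M i b) = 0" by blast
    then show ?thesis using True by (intro exI[of _ l]) auto
  next
    case False
    then obtain i0 where i0: "i0 \<in> I" "M i0 b \<noteq> 0" by auto
    define I' where "I' = I - {i0}"
    define M' where "M' = (\<lambda>i c. M i c - (M i b / M i0 b) * M i0 c)"
    have fI': "finite I'" using insert.prems I'_def by auto
    have cI: "card I' = card I - 1" using i0 insert.prems I'_def by auto
    have "card B < card I'" using insert.prems insert.hyps cI by auto
    from insert.IH[OF fI' this] obtain l where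
      l: "\<exists>i\<in>I'. l i \<noteq> 0" "\<forall>c\<in>B. (\<Sum>i\<in>I'. l i * M' i c) = 0" by blast
    define l' where "l' = (\<lambda>i. if i = i0 then - (\<Sum>j\<in>I'. l j * M j b) / M i0 b else l i)"
    have split: "(\<Sum>i\<in>I. l' i * M i c) = l' i0 * M i0 c + (\<Sum>i\<in>I'. l i * M i c)" for c
    proof -
      have "(\<Sum>i\<in>I. l' i * M i c) = l' i0 * M i0 c + (\<Sum>i\<in>I'. l' i * M i c)"
        unfolding I'_def using sum.remove[OF insert.prems(1) i0(1)] .
      also have "(\<Sum>i\<in>I'. l' i * M i c) = (\<Sum>i\<in>I'. l i * M i c)"
        by (rule sum.cong) (auto simp: l'_def I'_def)
      finally show ?thesis .
    qed
    have "\<forall>c\<in>insert b B. (\<Sum>i\<in>I. l' i * M i c) = 0"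
    proof
      fix c assume c: "c \<in> insert b B"
      have eq: "(\<Sum>i\<in>I. l' i * M i c) = (\<Sum>i\<in>I'. l i * M' i c)"
      proof -
        have "(\<Sum>i\<in>I'. l i * M' i c) = (\<Sum>i\<in>I'. l i * M i c) - (\<Sum>i\<in>I'. l i * M i b) / M i0 b * M i0 c"
          unfolding M'_def by (simp add: algebra_simps sum_subtractf sum_distrib_left sum_divide_distrib sum_distrib_right)
        moreover have "l' i0 * M i0 c = - ((\<Sum>j\<in>I'. l j * M j b) / M i0 b * M i0 c)"
          by (simp add: l'_def)
        ultimately show ?thesis using split[of c] by simp
      qed
      show "(\<Sum>i\<in>I. l' i * M i c) = 0"
      proof (cases "c = b")
        case True
        have "(\<Sum>i\<in>I'. l i * M' i b) = 0" unfolding M'_def using i0 by simp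
        then show ?thesis using eq True by simp
      next
        case False then show ?thesis using eq l c by auto
      qed
    qed
    moreover have "\<exists>i\<in>I. l' i \<noteq> 0" using l(1) I'_def by (auto simp: l'_def)
    ultimately show ?thesis by blast
  qed
qed

lemma den_clear:
  fixes p :: "'a :: {factorial_ring_gcd,semiring_gcd_mult_normalize} fract poly"
  shows "\<exists>d m. d \<noteq> 0 \<and> smult (to_fract d) p = fract_poly m"
proof -
  obtain c p' where p: "p = smult c (fract_poly p')" "content p' = 1"
    by (rule content_decompose_fract)
  define a b where "a = fst (quot_of_fract c)" and "b = snd (quot_of_fract c)"
  have b0: "b \<noteq> 0" by (simp add: b_def snd_quot_of_fract_nonzero)
  have c: "c = to_fract a / to_fract b"
    using Fract_quot_of_fract[of c] by (simp add: a_def b_def Fract_conv_to_fract)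
  have "smult (to_fract b) p = smult (to_fract a) (fract_poly p')"
    using b0 by (simp add: p c)
  also have "\<dots> = fract_poly (smult a p')" by simp
  finally show ?thesis using b0 by blast
qed

lemma den_clear_set:
  fixes mu :: "'b \<Rightarrow> 'a :: {factorial_ring_gcd,semiring_gcd_mult_normalize} fract poly"
  assumes "finite S"
  shows "\<exists>D. D \<noteq> 0 \<and> (\<forall>f\<in>S. \<exists>m. smult (to_fract D) (mu f) = fract_poly m)"
  using assms
proof (induction S rule: finite_induct)
  case empty then show ?case by (intro exI[of _ 1]) auto
next
  case (insert f S)
  then obtain D where D: "D \<noteq> 0" "\<forall>f\<in>S. \<exists>m. smult (to_fract D) (mu f) = fract_poly m" by blast
  obtain d m where dm: "d \<noteq> 0" "smult (to_fract d) (mu f) = fract_poly m"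
    using den_clear by blast
  have "\<forall>g\<in>insert f S. \<exists>m. smult (to_fract (d * D)) (mu g) = fract_poly m"
  proof
    fix g assume "g \<in> insert f S"
    then show "\<exists>m. smult (to_fract (d * D)) (mu g) = fract_poly m"
    proof
      assume "g = f"
      have "smult (to_fract (d * D)) (mu g) = smult (to_fract D) (smult (to_fract d) (mu f))"
        using \<open>g = f\<close> by (simp add: mult.commute)
      also have "\<dots> = fract_poly (smult D m)" using dm by simp
      finally show ?thesis by blast
    next
      assume "g \<in> S"
      then obtain m' where "smult (to_fract D) (mu g) = fract_poly m'" using D by blast
      then have "smult (to_fract (d * D)) (mu g) = smult (to_fract d) (fract_poly m')"
        by (metis mult.commute smult_smult to_fract_mult)
      then show ?thesis by (intro exI[of _ "smult d m'"]) simp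
    qed
  qed
  then show ?case using D dm by (intro exI[of _ "d * D"]) simp
qed

lemma fract_poly_sum: "fract_poly (sum f S) = (\<Sum>x\<in>S. fract_poly (f x))"
  by (induction S rule: infinite_finite_induct) auto

lemma smult_sum2: "smult c (sum f S) = (\<Sum>x\<in>S. smult c (f x))"
  by (induction S rule: infinite_finite_induct) (auto simp: smult_add_right)

lemma CD:
  fixes S :: "'a :: {factorial_ring_gcd,semiring_gcd_mult_normalize} poly set"
  assumes fin: "finite S" and nz: "\<exists>f\<in>S. f \<noteq> 0"
    and cop: "\<forall>d. (\<forall>f\<in>S. d dvd f) \<longrightarrow> is_unit d"
  shows "\<exists>l r. r \<noteq> 0 \<and> (\<Sum>f\<in>S. l f * f) = [:r:]"
proof -
  define J where "J = {(\<Sum>f\<in>S. mu f * fract_poly f) | mu. True}"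
  have J_nz: "\<exists>g\<in>J. g \<noteq> 0"
  proof -
    from nz obtain f0 where f0: "f0 \<in> S" "f0 \<noteq> 0" by blast
    have "(\<Sum>f\<in>S. (if f = f0 then 1 else 0) * fract_poly f) = (\<Sum>f\<in>S. if f = f0 then fract_poly f else 0)"
      by (rule sum.cong) auto
    also have "\<dots> = fract_poly f0" using fin f0 by (simp add: sum.delta')
    finally have se: "(\<Sum>f\<in>S. (if f = f0 then 1 else 0) * fract_poly f) = fract_poly f0" .
    have "fract_poly f0 \<in> J" unfolding J_def by (rule CollectI, rule exI[of _ "\<lambda>f. if f = f0 then 1 else 0"]) (simp add: se)
    then show ?thesis using f0 by (intro bexI[of _ "fract_poly f0"]) simp_all
  qed
  define P where "P = (\<lambda>n. \<exists>g\<in>J. g \<noteq> 0 \<and> degree g = n)"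
  have "\<exists>n. P n" using J_nz P_def by blast
  then obtain n where Pn: "P n" and minn: "\<And>m. m < n \<Longrightarrow> \<not> P m"
    using exists_least_iff[of P] by blast
  then obtain g where g: "g \<in> J" "g \<noteq> 0" "degree g = n" unfolding P_def by blast
  from g(1) obtain mu where mu: "g = (\<Sum>f\<in>S. mu f * fract_poly f)" unfolding J_def by blast
  have gdvd: "g dvd fract_poly f" if fS: "f \<in> S" for f
  proof (rule ccontr)
    assume nd: "\<not> g dvd fract_poly f"
    define r where "r = fract_poly f mod g"
    have r0: "r \<noteq> 0" using nd unfolding r_def by (simp add: mod_eq_0_iff_dvd)
    have rdeg: "degree r < degree g" using degree_mod_less_degree[OF g(2) nd] r_def by simp
    define mu' where "mu' = (\<lambda>h. (if h = f then 1 else 0) - (fract_poly f div g) * mu h)"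
    define q where "q = fract_poly f div g"
    have pw: "mu' h * fract_poly h = (if h = f then fract_poly h else 0) - q * (mu h * fract_poly h)" for h
      unfolding mu'_def q_def by (simp add: algebra_simps)
    have "(\<Sum>h\<in>S. mu' h * fract_poly h) = (\<Sum>h\<in>S. (if h = f then fract_poly h else 0)) - (\<Sum>h\<in>S. q * (mu h * fract_poly h))"
      unfolding pw by (rule sum_subtractf)
    also have "\<dots> = fract_poly f - q * g"
      using fin fS by (simp add: sum.delta' mu sum_distrib_left)
    finally have "(\<Sum>h\<in>S. mu' h * fract_poly h) = fract_poly f - (fract_poly f div g) * g"
      unfolding q_def .
    also have "\<dots> = r" unfolding r_def by (simp add: minus_div_mult_eq_mod)
    finally have "r \<in> J" unfolding J_def by blast
    then have "P (degree r)" using r0 P_def by blast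
    then show False using minn rdeg g(3) by blast
  qed
  obtain c g' where cg: "g = smult c (fract_poly g')" "content g' = 1"
    by (rule content_decompose_fract)
  have c0: "c \<noteq> 0" proof assume "c = 0" then show False using cg(1) g(2) by simp qed
  have "fract_poly g' dvd g"
    unfolding cg(1) by (rule dvd_smult) simp
  then have "g' dvd f" if "f \<in> S" for f
  proof -
    have "fract_poly g' dvd fract_poly f" using dvd_trans[OF \<open>fract_poly g' dvd g\<close> gdvd[OF that]] .
    then show ?thesis by (rule fract_poly_dvdD[OF _ cg(2)])
  qed
  then have "\<forall>f\<in>S. g' dvd f" by simp
  then have u: "is_unit g'" by (rule mp[OF spec[OF cop]])
  have g'0: "g' \<noteq> 0" proof assume "g' = 0" with cg(2) show False by simp qed
  have "degree g' = 0" using u by (auto elim!: is_unit_polyE)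
  then have "degree g = 0" using cg(1) degree_map_poly[of to_fract g'] by simp
  then have k: "g = [:coeff g 0:]" by (rule degree_0_id[symmetric])
  define k where "k = coeff g 0"
  note k = k[folded k_def]
  have k0: "k \<noteq> 0" using k g(2) by simp
  define mu1 where "mu1 = (\<lambda>f. smult (inverse k) (mu f))"
  have sum1: "(\<Sum>f\<in>S. mu1 f * fract_poly f) = 1"
  proof -
    have "(\<Sum>f\<in>S. mu1 f * fract_poly f) = smult (inverse k) g"
      unfolding mu1_def mu by (simp add: smult_sum2)
    also have "\<dots> = 1" using k k0 by (simp add: one_pCons)
    finally show ?thesis .
  qed
  obtain D where D: "D \<noteq> 0" "\<forall>f\<in>S. \<exists>m. smult (to_fract D) (mu1 f) = fract_poly m"
    using den_clear_set[OF fin, of mu1] by blast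
  from bchoice[OF D(2)] obtain l where l: "\<forall>f\<in>S. smult (to_fract D) (mu1 f) = fract_poly (l f)" by blast
  have "fract_poly (\<Sum>f\<in>S. l f * f) = (\<Sum>f\<in>S. fract_poly (l f) * fract_poly f)"
    by (simp add: fract_poly_sum)
  also have "\<dots> = (\<Sum>f\<in>S. smult (to_fract D) (mu1 f * fract_poly f))"
  proof (rule sum.cong[OF refl])
    fix f assume "f \<in> S"
    then have "fract_poly (l f) = smult (to_fract D) (mu1 f)" using l by simp
    then show "fract_poly (l f) * fract_poly f = smult (to_fract D) (mu1 f * fract_poly f)" by simp
  qed
  also have "\<dots> = smult (to_fract D) 1" by (simp add: smult_sum2[symmetric] sum1)
  also have "\<dots> = fract_poly [:D:]" by (simp add: poly_eq_iff coeff_map_poly coeff_pCons split: nat.splits)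
  finally have "(\<Sum>f\<in>S. l f * f) = [:D:]" by (simp only: fract_poly_eq_iff)
  then show ?thesis using D by blast
qed

type_synonym fn = "complex list \<Rightarrow> complex"

definition mon :: "(nat \<Rightarrow> nat) \<Rightarrow> fn" where
  "mon \<alpha> v = (\<Prod>i<6. (v!i) ^ (\<alpha> i))"

definition BoxT :: "nat set \<Rightarrow> nat \<Rightarrow> (nat \<Rightarrow> nat) set" where
  "BoxT T D = {\<alpha>. (\<forall>i\<in>T. \<alpha> i \<le> D) \<and> (\<forall>i. i \<notin> T \<longrightarrow> \<alpha> i = 0)}"

definition inS :: "nat set \<Rightarrow> nat \<Rightarrow> fn \<Rightarrow> bool" where
  "inS T D f \<longleftrightarrow> (\<exists>c. \<forall>v. f v = (\<Sum>\<alpha>\<in>BoxT T D. c \<alpha> * mon \<alpha> v))"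

lemma bij_BoxT: "bij_betw (\<lambda>\<alpha>. restrict \<alpha> T) (BoxT T D) (PiE T (\<lambda>_. {..D}))"
proof (rule bij_betwI')
  fix a b assume "a \<in> BoxT T D" "b \<in> BoxT T D"
  then have z: "\<forall>i. i \<notin> T \<longrightarrow> a i = 0 \<and> b i = 0" unfolding BoxT_def by blast
  show "(restrict a T = restrict b T) = (a = b)"
  proof
    assume r: "restrict a T = restrict b T"
    show "a = b"
    proof
      fix i show "a i = b i"
      proof (cases "i \<in> T")
        case True then show ?thesis using fun_cong[OF r, of i] by simp
      next
        case False then show ?thesis using z by simp
      qed
    qed
  qed simp
next
  fix a assume "a \<in> BoxT T D" then show "restrict a T \<in> PiE T (\<lambda>_. {..D})"
    unfolding BoxT_def by auto
next
  fix f assume f: "f \<in> PiE T (\<lambda>_. {..D})"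
  define a where "a = (\<lambda>i. if i \<in> T then f i else 0)"
  have "a \<in> BoxT T D" using f unfolding a_def BoxT_def by auto
  moreover have "f = restrict a T" using f unfolding a_def by (auto simp: restrict_def PiE_def extensional_def fun_eq_iff)
  ultimately show "\<exists>a\<in>BoxT T D. f = restrict a T" by blast
qed

lemma finite_BoxT: "finite T \<Longrightarrow> finite (BoxT T D)"
  using bij_betw_finite[OF bij_BoxT] by (simp add: finite_PiE)

lemma card_BoxT: "finite T \<Longrightarrow> card (BoxT T D) = (D+1) ^ card T"
  using bij_betw_same_card[OF bij_BoxT[of T D]] by (simp add: card_PiE)

lemma BoxT_mono: "T \<subseteq> T' \<Longrightarrow> D \<le> D' \<Longrightarrow> BoxT T D \<subseteq> BoxT T' D'"
proof
  fix a assume A: "T \<subseteq> T'" "D \<le> D'" "a \<in> BoxT T D"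
  have "a i \<le> D'" if "i \<in> T'" for i
  proof (cases "i \<in> T")
    case True then show ?thesis using A unfolding BoxT_def by auto
  next
    case False then show ?thesis using A unfolding BoxT_def by auto
  qed
  moreover have "\<forall>i. i \<notin> T' \<longrightarrow> a i = 0" using A unfolding BoxT_def by auto
  ultimately show "a \<in> BoxT T' D'" unfolding BoxT_def by auto
qed

lemma inS_group:
  assumes "finite T" "finite K" "\<forall>k\<in>K. \<phi> k \<in> BoxT T D"
    and "\<forall>v. f v = (\<Sum>k\<in>K. a k * mon (\<phi> k) v)"
  shows "inS T D f"
proof -
  define c where "c = (\<lambda>\<alpha>. \<Sum>k\<in>{k\<in>K. \<phi> k = \<alpha>}. a k)"
  have "f v = (\<Sum>\<alpha>\<in>BoxT T D. c \<alpha> * mon \<alpha> v)" for v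
  proof -
    have "(\<Sum>\<alpha>\<in>BoxT T D. c \<alpha> * mon \<alpha> v) = (\<Sum>\<alpha>\<in>BoxT T D. \<Sum>k\<in>{k\<in>K. \<phi> k = \<alpha>}. a k * mon (\<phi> k) v)"
      unfolding c_def by (auto simp: sum_distrib_right intro!: sum.cong)
    also have "\<dots> = (\<Sum>k\<in>K. a k * mon (\<phi> k) v)"
      using assms by (intro sum.group) (auto simp: finite_BoxT)
    finally show ?thesis using assms(4) by simp
  qed
  then show ?thesis unfolding inS_def by blast
qed

lemma inS_elim:
  assumes "inS T D f"
  obtains c where "\<forall>v. f v = (\<Sum>\<alpha>\<in>BoxT T D. c \<alpha> * mon \<alpha> v)"
  using assms unfolding inS_def by blast

lemma inS_mono:
  assumes "inS T D f" "T \<subseteq> T'" "D \<le> D'" "finite T'"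
  shows "inS T' D' f"
proof -
  obtain c where c: "\<forall>v. f v = (\<Sum>\<alpha>\<in>BoxT T D. c \<alpha> * mon \<alpha> v)" using assms(1) by (rule inS_elim)
  have "finite T" using assms finite_subset by blast
  show ?thesis
  proof (rule inS_group[of T' "BoxT T D" id D' f c])
    show "finite (BoxT T D)" using \<open>finite T\<close> by (rule finite_BoxT)
    have "BoxT T D \<subseteq> BoxT T' D'" using assms(2,3) by (rule BoxT_mono)
    then show "\<forall>k\<in>BoxT T D. id k \<in> BoxT T' D'" by auto
    show "\<forall>v. f v = (\<Sum>k\<in>BoxT T D. c k * mon (id k) v)" using c by simp
  qed (rule assms(4))
qed

lemma mon_zero[simp]: "mon (\<lambda>_. 0) v = 1"
  by (simp add: mon_def)

lemma mon_add: "mon (\<lambda>i. a i + b i) v = mon a v * mon b v"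
  by (simp add: mon_def power_add prod.distrib)

lemma zero_BoxT: "(\<lambda>_. 0) \<in> BoxT T D"
  by (simp add: BoxT_def)

lemma add_BoxT: "a \<in> BoxT T D1 \<Longrightarrow> b \<in> BoxT T D2 \<Longrightarrow> (\<lambda>i. a i + b i) \<in> BoxT T (D1+D2)"
  unfolding BoxT_def by (auto intro: add_mono)

lemma inS_const: "finite T \<Longrightarrow> inS T D (\<lambda>v. c)"
  by (rule inS_group[of T "{()}" "\<lambda>_. \<lambda>_. 0" D _ "\<lambda>_. c"]) (auto simp: zero_BoxT)

lemma inS_mono_elem: "finite T \<Longrightarrow> \<alpha> \<in> BoxT T D \<Longrightarrow> inS T D (mon \<alpha>)"
  by (rule inS_group[of T "{()}" "\<lambda>_. \<alpha>" D _ "\<lambda>_. 1"]) auto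

lemma inS_add:
  assumes "inS T D f" "inS T D g"
  shows "inS T D (\<lambda>v. f v + g v)"
proof -
  obtain c where c: "\<forall>v. f v = (\<Sum>\<alpha>\<in>BoxT T D. c \<alpha> * mon \<alpha> v)" using assms(1) by (rule inS_elim)
  obtain d where d: "\<forall>v. g v = (\<Sum>\<alpha>\<in>BoxT T D. d \<alpha> * mon \<alpha> v)" using assms(2) by (rule inS_elim)
  have e: "\<forall>v. f v + g v = (\<Sum>\<alpha>\<in>BoxT T D. (c \<alpha> + d \<alpha>) * mon \<alpha> v)"
    using c d by (simp add: distrib_right sum.distrib)
  show ?thesis unfolding inS_def by (rule exI[of _ "\<lambda>\<alpha>. c \<alpha> + d \<alpha>"]) (rule e)
qed

lemma inS_scale:
  assumes "inS T D f"
  shows "inS T D (\<lambda>v. k * f v)"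
proof -
  obtain c where c: "\<forall>v. f v = (\<Sum>\<alpha>\<in>BoxT T D. c \<alpha> * mon \<alpha> v)" using assms(1) by (rule inS_elim)
  have e: "\<forall>v. k * f v = (\<Sum>\<alpha>\<in>BoxT T D. (k * c \<alpha>) * mon \<alpha> v)"
    using c by (simp add: sum_distrib_left mult.assoc)
  show ?thesis unfolding inS_def by (rule exI[of _ "\<lambda>\<alpha>. k * c \<alpha>"]) (rule e)
qed

lemma inS_sum:
  assumes "finite T" "\<And>k. k \<in> K \<Longrightarrow> inS T D (f k)"
  shows "inS T D (\<lambda>v. \<Sum>k\<in>K. f k v)"
  using assms(2)
proof (induction K rule: infinite_finite_induct)
  case (infinite K) then show ?case using inS_const[OF assms(1)] by simp
next
  case empty then show ?case using inS_const[OF assms(1)] by simp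
next
  case (insert x F) then show ?case by (simp add: inS_add)
qed

lemma inS_mult:
  assumes "finite T" "inS T D1 f" "inS T D2 g"
  shows "inS T (D1+D2) (\<lambda>v. f v * g v)"
proof -
  obtain c where c: "\<forall>v. f v = (\<Sum>\<alpha>\<in>BoxT T D1. c \<alpha> * mon \<alpha> v)" using assms(2) by (rule inS_elim)
  obtain d where d: "\<forall>v. g v = (\<Sum>\<alpha>\<in>BoxT T D2. d \<alpha> * mon \<alpha> v)" using assms(3) by (rule inS_elim)
  have "\<forall>v. f v * g v = (\<Sum>k\<in>BoxT T D1 \<times> BoxT T D2. (c (fst k) * d (snd k)) * mon (\<lambda>i. fst k i + snd k i) v)"
  proof
    fix v
    have "f v * g v = (\<Sum>\<alpha>\<in>BoxT T D1. \<Sum>\<beta>\<in>BoxT T D2. (c \<alpha> * mon \<alpha> v) * (d \<beta> * mon \<beta> v))"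
      using c d by (simp add: sum_product)
    also have "\<dots> = (\<Sum>k\<in>BoxT T D1 \<times> BoxT T D2. (c (fst k) * mon (fst k) v) * (d (snd k) * mon (snd k) v))"
      by (simp add: sum.cartesian_product case_prod_beta)
    also have "\<dots> = (\<Sum>k\<in>BoxT T D1 \<times> BoxT T D2. (c (fst k) * d (snd k)) * mon (\<lambda>i. fst k i + snd k i) v)"
      by (rule sum.cong[OF refl]) (simp add: mon_add mult_ac)
    finally show "f v * g v = (\<Sum>k\<in>BoxT T D1 \<times> BoxT T D2. (c (fst k) * d (snd k)) * mon (\<lambda>i. fst k i + snd k i) v)" .
  qed
  then show ?thesis
    by (intro inS_group[OF assms(1), of "BoxT T D1 \<times> BoxT T D2"]) (auto simp: finite_BoxT assms add_BoxT)
qed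

lemma inS_pow:
  assumes "finite T" "inS T D f"
  shows "inS T (n*D) (\<lambda>v. f v ^ n)"
proof (induction n)
  case 0 then show ?case using inS_const[OF assms(1)] by simp
next
  case (Suc n)
  have "inS T (D + n*D) (\<lambda>v. f v * f v ^ n)" by (rule inS_mult[OF assms Suc])
  then show ?case by simp
qed

lemma inS_prod:
  assumes "finite T" "finite K" "\<And>k. k \<in> K \<Longrightarrow> inS T (D k) (f k)"
  shows "inS T (\<Sum>k\<in>K. D k) (\<lambda>v. \<Prod>k\<in>K. f k v)"
  using assms(2,3)
proof (induction K rule: finite_induct)
  case empty then show ?case using inS_const[OF assms(1)] by simp
next
  case (insert x F)
  have "inS T (D x + (\<Sum>k\<in>F. D k)) (\<lambda>v. f x v * (\<Prod>k\<in>F. f k v))"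
    by (rule inS_mult[OF assms(1)]) (use insert in auto)
  then show ?case using insert by simp
qed

lemma inS_var:
  assumes "finite T" "i \<in> T" "i < 6"
  shows "inS T 1 (\<lambda>v. v!i)"
proof -
  define a where "a = (\<lambda>j. if j = i then 1 else (0::nat))"
  have "a \<in> BoxT T 1" using assms unfolding a_def BoxT_def by auto
  moreover have "mon a v = v!i" for v
  proof -
    have "mon a v = (\<Prod>j<6. if j = i then v!i else 1)"
      unfolding mon_def a_def by (rule prod.cong) auto
    also have "\<dots> = v!i" using assms(3) by (simp add: prod.delta)
    finally show ?thesis .
  qed
  ultimately have "inS T 1 (mon a)" "mon a = (\<lambda>v. v!i)" using inS_mono_elem[OF assms(1)] by auto
  then show ?thesis by simp
qed

lemma inS_poly:
  assumes "finite T" "i \<in> T" "i < 6"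
  shows "inS T (degree p) (\<lambda>v. poly p (v!i))"
proof -
  have "inS T (degree p) (\<lambda>v. \<Sum>k\<le>degree p. coeff p k * (v!i)^k)"
  proof (rule inS_sum[OF assms(1)])
    fix k assume k: "k \<in> {..degree p}"
    have "inS T (k*1) (\<lambda>v. (v!i)^k)" by (rule inS_pow[OF assms(1) inS_var[OF assms]])
    then have "inS T (degree p) (\<lambda>v. (v!i)^k)" using k by (auto intro: inS_mono[OF _ order_refl _ assms(1)])
    then show "inS T (degree p) (\<lambda>v. coeff p k * (v!i)^k)" by (rule inS_scale)
  qed
  then show ?thesis by (simp add: poly_altdef)
qed

lemma poly_fun_sum: "(\<And>k. k \<in> K \<Longrightarrow> poly_fun n (f k)) \<Longrightarrow> poly_fun n (\<lambda>v. \<Sum>k\<in>K. f k v)"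
proof (induction K rule: infinite_finite_induct)
  case (infinite K) then show ?case by (simp add: poly_fun.pf_const)
next
  case empty then show ?case by (simp add: poly_fun.pf_const)
next
  case (insert x F) then show ?case by (simp add: poly_fun.pf_add)
qed

lemma poly_fun_prod: "finite K \<Longrightarrow> (\<And>k. k \<in> K \<Longrightarrow> poly_fun n (f k)) \<Longrightarrow> poly_fun n (\<lambda>v. \<Prod>k\<in>K. f k v)"
proof (induction K rule: finite_induct)
  case empty then show ?case by (simp add: poly_fun.pf_const)
next
  case (insert x F) then show ?case by (simp add: poly_fun.pf_mult)
qed

lemma poly_fun_pow: "poly_fun n f \<Longrightarrow> poly_fun n (\<lambda>v. f v ^ k)"
  by (induction k) (auto intro: poly_fun.intros)

lemma poly_fun_mono: "poly_fun 6 (mon \<alpha>)"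
  unfolding mon_def by (rule poly_fun_prod) (auto intro!: poly_fun_pow poly_fun.pf_var)

lemma poly_fun_inS: "inS T D f \<Longrightarrow> poly_fun 6 f"
proof -
  assume "inS T D f"
  then obtain c where c: "\<forall>v. f v = (\<Sum>\<alpha>\<in>BoxT T D. c \<alpha> * mon \<alpha> v)" by (rule inS_elim)
  have "poly_fun 6 (\<lambda>v. \<Sum>\<alpha>\<in>BoxT T D. c \<alpha> * mon \<alpha> v)"
    by (rule poly_fun_sum) (auto intro!: poly_fun.pf_mult poly_fun.pf_const poly_fun_mono)
  moreover have "f = (\<lambda>v. \<Sum>\<alpha>\<in>BoxT T D. c \<alpha> * mon \<alpha> v)" using c by auto
  ultimately show ?thesis by simp
qed

lemma inS_poly_fun: "poly_fun 6 f \<Longrightarrow> \<exists>D. inS {..<6} D f"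
proof (induction rule: poly_fun.induct)
  case (pf_const c) then show ?case using inS_const by blast
next
  case (pf_var i) then show ?case using inS_var[of "{..<6}" i] by auto
next
  case (pf_add p q)
  then obtain D1 D2 where "inS {..<6} D1 p" "inS {..<6} D2 q" by blast
  then have "inS {..<6} (max D1 D2) p" "inS {..<6} (max D1 D2) q" by (auto elim: inS_mono)
  then show ?case using inS_add by blast
next
  case (pf_mult p q)
  then obtain D1 D2 where "inS {..<6} D1 p" "inS {..<6} D2 q" by blast
  then show ?case using inS_mult[of "{..<6}"] by blast
qed

definition van :: "complex list set \<Rightarrow> fn \<Rightarrow> bool" where
  "van Z f \<longleftrightarrow> (\<forall>v\<in>Z. f v = 0)"

definition prime_set :: "complex list set \<Rightarrow> bool" where
  "prime_set Z \<longleftrightarrow> Z \<noteq> {} \<and> (\<forall>f g. poly_fun 6 f \<longrightarrow> poly_fun 6 g \<longrightarrow> van Z (\<lambda>v. f v * g v) \<longrightarrow> van Z f \<or> van Z g)"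

lemma closed_len: "zariski_closed n Z \<Longrightarrow> v \<in> Z \<Longrightarrow> length v = n"
  unfolding zariski_closed_def by auto

lemma closed_zero: "poly_fun n f \<Longrightarrow> zariski_closed n {v. length v = n \<and> f v = 0}"
  unfolding zariski_closed_def by (rule exI[of _ "{f}"]) auto

lemma irr_prime:
  assumes "zariski_irreducible 6 Z"
  shows "prime_set Z"
proof -
  have cl: "zariski_closed 6 Z" and ne: "Z \<noteq> {}" using assms unfolding zariski_irreducible_def by auto
  have "van Z f \<or> van Z g" if f: "poly_fun 6 f" and g: "poly_fun 6 g" and fg: "van Z (\<lambda>v. f v * g v)" for f g
  proof -
    let ?A = "{v. length v = 6 \<and> f v = 0}" and ?B = "{v. length v = 6 \<and> g v = 0}"
    have "Z \<subseteq> ?A \<union> ?B" using fg closed_len[OF cl] unfolding van_def by auto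
    then have "Z \<subseteq> ?A \<or> Z \<subseteq> ?B"
      using assms closed_zero[OF f] closed_zero[OF g] unfolding zariski_irreducible_def by blast
    then show ?thesis unfolding van_def by auto
  qed
  then show ?thesis using ne unfolding prime_set_def by blast
qed

lemma prime_mult:
  "prime_set Z \<Longrightarrow> poly_fun 6 f \<Longrightarrow> poly_fun 6 g \<Longrightarrow> \<not> van Z f \<Longrightarrow> \<not> van Z g \<Longrightarrow> \<not> van Z (\<lambda>v. f v * g v)"
  unfolding prime_set_def by blast

lemma prime_pow:
  assumes "prime_set Z" "poly_fun 6 f" "\<not> van Z f"
  shows "\<not> van Z (\<lambda>v. f v ^ n)"
proof (induction n)
  case 0 then show ?case using assms(1) unfolding prime_set_def van_def by auto
next
  case (Suc n)
  have "\<not> van Z (\<lambda>v. f v * f v ^ n)"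
    by (rule prime_mult[OF assms(1,2) poly_fun_pow[OF assms(2)] assms(3) Suc])
  then show ?case by simp
qed

definition inspan :: "complex list set \<Rightarrow> fn set \<Rightarrow> fn \<Rightarrow> bool" where
  "inspan Z B f \<longleftrightarrow> (\<exists>c. \<forall>v\<in>Z. f v = (\<Sum>b\<in>B. c b * b v))"

lemma inspan_group:
  assumes "finite B" "finite K" "\<forall>k\<in>K. \<psi> k \<in> B"
    and "\<forall>v\<in>Z. f v = (\<Sum>k\<in>K. a k * \<psi> k v)"
  shows "inspan Z B f"
proof -
  define c where "c = (\<lambda>b. \<Sum>k\<in>{k\<in>K. \<psi> k = b}. a k)"
  have "f v = (\<Sum>b\<in>B. c b * b v)" if v: "v \<in> Z" for v
  proof -
    have "(\<Sum>b\<in>B. c b * b v) = (\<Sum>b\<in>B. \<Sum>k\<in>{k\<in>K. \<psi> k = b}. a k * \<psi> k v)"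
      unfolding c_def by (auto simp: sum_distrib_right intro!: sum.cong)
    also have "\<dots> = (\<Sum>k\<in>K. a k * \<psi> k v)"
      using assms by (intro sum.group) auto
    finally show ?thesis using assms(4) v by simp
  qed
  then show ?thesis unfolding inspan_def by blast
qed

lemma inspan_elim:
  assumes "inspan Z B f"
  obtains c where "\<forall>v\<in>Z. f v = (\<Sum>b\<in>B. c b * b v)"
  using assms unfolding inspan_def by blast

lemma inspan_elem: "finite B \<Longrightarrow> b \<in> B \<Longrightarrow> inspan Z B b"
  by (rule inspan_group[of B "{()}" "\<lambda>_. b" Z b "\<lambda>_. 1"]) auto

lemma inspan_cong: "(\<And>v. v \<in> Z \<Longrightarrow> f v = g v) \<Longrightarrow> inspan Z B g \<Longrightarrow> inspan Z B f"
  unfolding inspan_def by auto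

lemma inspan_mulfix:
  assumes "finite B" "inspan Z B f"
  shows "inspan Z ((\<lambda>b v. g v * b v) ` B) (\<lambda>v. g v * f v)"
proof -
  obtain c where c: "\<forall>v\<in>Z. f v = (\<Sum>b\<in>B. c b * b v)" using assms(2) by (rule inspan_elim)
  show ?thesis
  proof (rule inspan_group[of _ B "\<lambda>b v. g v * b v" _ _ c])
    show "\<forall>v\<in>Z. g v * f v = (\<Sum>k\<in>B. c k * (g v * k v))"
      using c by (simp add: sum_distrib_left mult_ac)
  qed (use assms in auto)
qed

lemma inspan_mono_set:
  assumes "finite B'" "B \<subseteq> B'" "inspan Z B f"
  shows "inspan Z B' f"
proof -
  obtain c where c: "\<forall>v\<in>Z. f v = (\<Sum>b\<in>B. c b * b v)" using assms(3) by (rule inspan_elim)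
  have fB: "finite B" using assms(1,2) finite_subset by blast
  show ?thesis by (rule inspan_group[of B' B id Z f c]) (use assms fB c in auto)
qed

lemma inspan_lin:
  assumes "finite B" "finite K" "\<forall>k\<in>K. inspan Z B (h k)"
  shows "inspan Z B (\<lambda>v. \<Sum>k\<in>K. a k * h k v)"
proof -
  have "\<forall>k\<in>K. \<exists>c. \<forall>v\<in>Z. h k v = (\<Sum>b\<in>B. c b * b v)" using assms(3) unfolding inspan_def by blast
  from bchoice[OF this] obtain C where C: "\<forall>k\<in>K. \<forall>v\<in>Z. h k v = (\<Sum>b\<in>B. C k b * b v)" by blast
  show ?thesis
  proof (rule inspan_group[of B "K \<times> B" snd Z _ "\<lambda>kb. a (fst kb) * C (fst kb) (snd kb)"])
    show "\<forall>v\<in>Z. (\<Sum>k\<in>K. a k * h k v) = (\<Sum>kb\<in>K \<times> B. a (fst kb) * C (fst kb) (snd kb) * snd kb v)"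
    proof
      fix v assume v: "v \<in> Z"
      have "(\<Sum>k\<in>K. a k * h k v) = (\<Sum>k\<in>K. \<Sum>b\<in>B. a k * C k b * b v)"
        using C v by (auto simp: sum_distrib_left mult_ac intro!: sum.cong)
      also have "\<dots> = (\<Sum>kb\<in>K \<times> B. a (fst kb) * C (fst kb) (snd kb) * snd kb v)"
        by (simp add: sum.cartesian_product case_prod_beta)
      finally show "(\<Sum>k\<in>K. a k * h k v) = (\<Sum>kb\<in>K \<times> B. a (fst kb) * C (fst kb) (snd kb) * snd kb v)" .
    qed
  qed (use assms in auto)
qed

definition alg :: "complex list set \<Rightarrow> nat set \<Rightarrow> nat \<Rightarrow> bool" where
  "alg Z T u \<longleftrightarrow> (\<exists>m e c. (\<forall>l\<le>m. inS T e (c l)) \<and> \<not> van Z (c m) \<and>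
      (\<forall>v\<in>Z. (\<Sum>l\<le>m. c l v * (v!u)^l) = 0))"

lemma alg_intro:
  assumes "\<forall>l\<le>m. inS T e (c l)" "\<exists>l\<le>m. \<not> van Z (c l)"
    and "\<forall>v\<in>Z. (\<Sum>l\<le>m. c l v * (v!u)^l) = 0"
  shows "alg Z T u"
proof -
  define P where "P = (\<lambda>l. l \<le> m \<and> \<not> van Z (c l))"
  define m' where "m' = (GREATEST l. P l)"
  have ex: "\<exists>l. P l" using assms(2) P_def by blast
  have bnd: "\<forall>l. P l \<longrightarrow> l \<le> m" using P_def by blast
  have Pm': "P m'" unfolding m'_def using GreatestI_ex_nat[OF ex] bnd by blast
  have gr: "\<And>l. P l \<Longrightarrow> l \<le> m'" unfolding m'_def using Greatest_le_nat bnd by blast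
  have "(\<Sum>l\<le>m'. c l v * (v!u)^l) = 0" if v: "v \<in> Z" for v
  proof -
    have "(\<Sum>l\<le>m. c l v * (v!u)^l) = (\<Sum>l\<le>m'. c l v * (v!u)^l)"
    proof (rule sum.mono_neutral_right)
      show "{..m'} \<subseteq> {..m}" using Pm' P_def by auto
      show "\<forall>i\<in>{..m} - {..m'}. c i v * (v!u)^i = 0"
      proof
        fix i assume i: "i \<in> {..m} - {..m'}"
        then have "\<not> P i" using gr by force
        then have "van Z (c i)" using i P_def by auto
        then show "c i v * (v!u)^i = 0" using v van_def by auto
      qed
    qed auto
    then show ?thesis using assms(3) v by simp
  qed
  moreover have "\<forall>l\<le>m'. inS T e (c l)" using assms(1) Pm' P_def by auto
  moreover have "\<not> van Z (c m')" using Pm' P_def by auto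
  ultimately show ?thesis unfolding alg_def by blast
qed

lemma alg_mono:
  assumes "alg Z T u" "T \<subseteq> T'" "finite T'"
  shows "alg Z T' u"
proof -
  obtain m e c where "\<forall>l\<le>m. inS T e (c l)" "\<not> van Z (c m)" "\<forall>v\<in>Z. (\<Sum>l\<le>m. c l v * (v!u)^l) = 0"
    using assms(1) unfolding alg_def by blast
  moreover have "\<forall>l\<le>m. inS T' e (c l)" using calculation(1) inS_mono[OF _ assms(2) order_refl assms(3)] by blast
  ultimately show ?thesis unfolding alg_def by blast
qed

definition Good :: "complex list set \<Rightarrow> nat set \<Rightarrow> nat \<Rightarrow> bool" where
  "Good Z T k \<longleftrightarrow> (\<exists>A c. poly_fun 6 A \<and> \<not> van Z A \<and> (\<forall>D. \<exists>N B. finite B \<and> card B \<le> c * (D+1)^k \<and>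
       (\<forall>\<alpha>\<in>BoxT T D. inspan Z B (\<lambda>v. A v ^ N * mon \<alpha> v))))"

lemma Good_base:
  assumes "T \<subseteq> {..<6}" "Z \<noteq> {}"
  shows "Good Z T (card T)"
proof -
  have fT: "finite T" using assms(1) finite_subset by blast
  have "\<exists>N B. finite B \<and> card B \<le> 1 * (D+1)^card T \<and> (\<forall>\<alpha>\<in>BoxT T D. inspan Z B (\<lambda>v. 1 ^ N * mon \<alpha> v))" for D
  proof (intro exI conjI)
    show "finite (mon ` BoxT T D)" using finite_BoxT[OF fT] by simp
    show "card (mon ` BoxT T D) \<le> 1 * (D+1)^card T" using card_image_le[OF finite_BoxT[OF fT]] card_BoxT[OF fT] by simp
    show "\<forall>\<alpha>\<in>BoxT T D. inspan Z (mon ` BoxT T D) (\<lambda>v. 1 ^ 0 * mon \<alpha> v)"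
      using inspan_elem finite_BoxT[OF fT] by simp
  qed
  moreover have "poly_fun 6 (\<lambda>v. 1)" by (rule poly_fun.pf_const)
  moreover have "\<not> van Z (\<lambda>v. 1)" using assms(2) unfolding van_def by auto
  ultimately show ?thesis unfolding Good_def by blast
qed

lemma mon_split:
  assumes "u < 6"
  shows "mon \<alpha> v = mon (\<alpha>(u:=0)) v * (v!u)^(\<alpha> u)"
proof -
  have "mon \<alpha> v = (v!u)^(\<alpha> u) * (\<Prod>i\<in>{..<6}-{u}. (v!i)^(\<alpha> i))"
    unfolding mon_def using assms by (simp add: prod.remove)
  moreover have "mon (\<alpha>(u:=0)) v = (\<Prod>i\<in>{..<6}-{u}. (v!i)^(\<alpha> i))"
  proof -
    have "mon (\<alpha>(u:=0)) v = (v!u)^((\<alpha>(u:=0)) u) * (\<Prod>i\<in>{..<6}-{u}. (v!i)^((\<alpha>(u:=0)) i))"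
      unfolding mon_def by (rule prod.remove) (use assms in auto)
    also have "(\<Prod>i\<in>{..<6}-{u}. (v!i)^((\<alpha>(u:=0)) i)) = (\<Prod>i\<in>{..<6}-{u}. (v!i)^(\<alpha> i))"
      by (rule prod.cong) auto
    finally show ?thesis by (simp only: fun_upd_same power_0 mult_1_left)
  qed
  ultimately show ?thesis by (simp add: mult.commute)
qed

definition repW :: "complex list set \<Rightarrow> nat set \<Rightarrow> nat \<Rightarrow> nat \<Rightarrow> nat \<Rightarrow> fn \<Rightarrow> bool" where
  "repW Z T u m E f \<longleftrightarrow> (\<exists>h. (\<forall>l<m. inS T E (h l)) \<and> (\<forall>v\<in>Z. f v = (\<Sum>l<m. h l v * (v!u)^l)))"

lemma repW_mono:
  assumes "repW Z T u m E f" "E \<le> E'" "finite T"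
  shows "repW Z T u m E' f"
  using assms inS_mono[OF _ order_refl assms(2) assms(3)] unfolding repW_def by blast

lemma repW_cong:
  assumes "\<And>v. v \<in> Z \<Longrightarrow> f v = g v" "repW Z T u m E g"
  shows "repW Z T u m E f"
  using assms unfolding repW_def by auto

lemma repW_add:
  assumes "repW Z T u m E f" "repW Z T u m E g"
  shows "repW Z T u m E (\<lambda>v. f v + g v)"
proof -
  obtain h where h: "\<forall>l<m. inS T E (h l)" "\<forall>v\<in>Z. f v = (\<Sum>l<m. h l v * (v!u)^l)"
    using assms(1) unfolding repW_def by blast
  obtain h' where h': "\<forall>l<m. inS T E (h' l)" "\<forall>v\<in>Z. g v = (\<Sum>l<m. h' l v * (v!u)^l)"
    using assms(2) unfolding repW_def by blast
  have "\<forall>l<m. inS T E (\<lambda>v. h l v + h' l v)" using h h' inS_add by blast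
  moreover have "\<forall>v\<in>Z. f v + g v = (\<Sum>l<m. (h l v + h' l v) * (v!u)^l)"
    using h h' by (simp add: distrib_right sum.distrib)
  ultimately show ?thesis unfolding repW_def by (intro exI[of _ "\<lambda>l v. h l v + h' l v"]) blast
qed

lemma repW_scale:
  assumes "repW Z T u m E f"
  shows "repW Z T u m E (\<lambda>v. k * f v)"
proof -
  obtain h where h: "\<forall>l<m. inS T E (h l)" "\<forall>v\<in>Z. f v = (\<Sum>l<m. h l v * (v!u)^l)"
    using assms(1) unfolding repW_def by blast
  have "\<forall>l<m. inS T E (\<lambda>v. k * h l v)" using h inS_scale by blast
  moreover have "\<forall>v\<in>Z. k * f v = (\<Sum>l<m. (k * h l v) * (v!u)^l)"
    using h by (simp add: sum_distrib_left mult_ac)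
  ultimately show ?thesis unfolding repW_def by (intro exI[of _ "\<lambda>l v. k * h l v"]) blast
qed

lemma repW_zero:
  assumes "finite T"
  shows "repW Z T u m E (\<lambda>v. 0)"
  unfolding repW_def by (rule exI[of _ "\<lambda>l v. 0"]) (simp add: inS_const[OF assms])

lemma repW_sum:
  assumes "finite T" "\<And>k. k \<in> K \<Longrightarrow> repW Z T u m E (f k)"
  shows "repW Z T u m E (\<lambda>v. \<Sum>k\<in>K. f k v)"
  using assms(2)
proof (induction K rule: infinite_finite_induct)
  case (infinite K) then show ?case using repW_zero[OF assms(1)] by simp
next
  case empty then show ?case using repW_zero[OF assms(1)] by simp
next
  case (insert x F) then show ?case by (simp add: repW_add)
qed

lemma repW_mul:
  assumes "finite T" "inS T E1 g" "repW Z T u m E2 f"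
  shows "repW Z T u m (E1+E2) (\<lambda>v. g v * f v)"
proof -
  obtain h where h: "\<forall>l<m. inS T E2 (h l)" "\<forall>v\<in>Z. f v = (\<Sum>l<m. h l v * (v!u)^l)"
    using assms(3) unfolding repW_def by blast
  have "\<forall>l<m. inS T (E1+E2) (\<lambda>v. g v * h l v)" using h inS_mult[OF assms(1) assms(2)] by blast
  moreover have "\<forall>v\<in>Z. g v * f v = (\<Sum>l<m. (g v * h l v) * (v!u)^l)"
    using h by (simp add: sum_distrib_left mult_ac)
  ultimately show ?thesis unfolding repW_def by (intro exI[of _ "\<lambda>l v. g v * h l v"]) blast
qed

lemma repW_base:
  assumes "finite T" "inS T E g" "l0 < m"
  shows "repW Z T u m E (\<lambda>v. g v * (v!u)^l0)"
proof -
  define h where "h = (\<lambda>l v. if l = l0 then g v else 0)"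
  have "\<forall>l<m. inS T E (h l)"
  proof (intro allI impI)
    fix l assume "l < m"
    show "inS T E (h l)"
    proof (cases "l = l0")
      case True then show ?thesis using assms(2) unfolding h_def by simp
    next
      case False then show ?thesis using inS_const[OF assms(1)] unfolding h_def by simp
    qed
  qed
  moreover have "\<forall>v\<in>Z. g v * (v!u)^l0 = (\<Sum>l<m. h l v * (v!u)^l)"
  proof
    fix v
    have "(\<Sum>l<m. h l v * (v!u)^l) = (\<Sum>l<m. if l = l0 then g v * (v!u)^l else 0)"
      unfolding h_def by (rule sum.cong) auto
    also have "\<dots> = g v * (v!u)^l0" using assms(3) by (simp add: sum.delta')
    finally show "g v * (v!u)^l0 = (\<Sum>l<m. h l v * (v!u)^l)" by simp
  qed
  ultimately show ?thesis unfolding repW_def by blast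
qed

lemma reduction:
  assumes fT: "finite T" and c: "\<forall>l\<le>m. inS T e (c l)"
    and rel: "\<forall>v\<in>Z. (\<Sum>l\<le>m. c l v * (v!u)^l) = 0" and m0: "0 < m"
  shows "repW Z T u m (j*e) (\<lambda>v. c m v ^ j * (v!u)^j)"
proof (induction j rule: less_induct)
  case (less j)
  show ?case
  proof (cases "j < m")
    case True
    have "inS T (j*e) (\<lambda>v. c m v ^ j)" using inS_pow[OF fT] c by auto
    then show ?thesis using repW_base[OF fT _ True] by blast
  next
    case False
    then have jm: "m \<le> j" by simp
    have rel': "c m v * (v!u)^m = - (\<Sum>l<m. c l v * (v!u)^l)" if "v \<in> Z" for v
    proof -
      have "(\<Sum>l\<le>m. c l v * (v!u)^l) = (\<Sum>l<Suc m. c l v * (v!u)^l)"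
        by (simp add: lessThan_Suc_atMost)
      also have "\<dots> = (\<Sum>l<m. c l v * (v!u)^l) + c m v * (v!u)^m" by (rule sum.lessThan_Suc)
      finally show ?thesis using rel that by (simp add: eq_neg_iff_add_eq_0 add.commute)
    qed
    define g where "g = (\<lambda>l v. c l v * c m v ^ (m - 1 - l))"
    define r where "r = (\<lambda>l v. c m v ^ (j - m + l) * (v!u)^(j - m + l))"
    have eq: "c m v ^ j * (v!u)^j = - (\<Sum>l<m. g l v * r l v)" if v: "v \<in> Z" for v
    proof -
      have js: "j = Suc (j-1)" using jm m0 by arith
      have pj: "c m v ^ j = c m v ^ (j - 1) * c m v"
        using power_Suc2[of "c m v" "j-1"] js by simp
      have jsm: "j = (j-m) + m" using jm by arith
      have uj: "(v!u)^j = (v!u)^(j-m) * (v!u)^m"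
        using power_add[of "v!u" "j-m" m] jsm by simp
      have "c m v ^ j * (v!u)^j = c m v ^ (j-1) * (v!u)^(j-m) * (c m v * (v!u)^m)"
        using pj uj by (simp add: mult_ac)
      also have "\<dots> = - (\<Sum>l<m. c m v ^ (j-1) * (v!u)^(j-m) * (c l v * (v!u)^l))"
        using rel'[OF v] by (simp add: sum_distrib_left)
      also have "(\<Sum>l<m. c m v ^ (j-1) * (v!u)^(j-m) * (c l v * (v!u)^l)) = (\<Sum>l<m. g l v * r l v)"
      proof (rule sum.cong[OF refl])
        fix l assume "l \<in> {..<m}"
        then have l: "l < m" by simp
        have e1: "j - 1 = (m - 1 - l) + (j - m + l)" using l jm by arith
        show "c m v ^ (j-1) * (v!u)^(j-m) * (c l v * (v!u)^l) = g l v * r l v"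
          unfolding g_def r_def by (simp only: e1 power_add mult_ac)
      qed
      finally show ?thesis .
    qed
    have "repW Z T u m (j*e) (\<lambda>v. g l v * r l v)" if l: "l \<in> {..<m}" for l
    proof -
      have l': "l < m" using l by simp
      have ig: "inS T (e + (m-1-l)*e) (g l)" unfolding g_def
        using inS_mult[OF fT] inS_pow[OF fT] c l' by auto
      have "j - m + l < j" using l' jm by arith
      then have ir: "repW Z T u m ((j-m+l)*e) (r l)" unfolding r_def using less.IH by blast
      have a: "1 + (m-1-l) + (j-m+l) = j" using l' jm by arith
      have "e + (m-1-l)*e + (j-m+l)*e = (1 + (m-1-l) + (j-m+l)) * e" by (simp add: algebra_simps)
      then have b: "e + (m-1-l)*e + (j-m+l)*e = j*e" using a by simp
      show ?thesis using repW_mul[OF fT ig ir] b by simp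
    qed
    then have "repW Z T u m (j*e) (\<lambda>v. \<Sum>l<m. g l v * r l v)" by (rule repW_sum[OF fT])
    then have "repW Z T u m (j*e) (\<lambda>v. (-1) * (\<Sum>l<m. g l v * r l v))" by (rule repW_scale)
    then show ?thesis by (rule repW_cong[rotated]) (simp add: eq)
  qed
qed

lemma inspan_inS:
  assumes "finite T" "finite B" "\<forall>\<beta>\<in>BoxT T E. inspan Z B (\<lambda>v. A v^N * mon \<beta> v)" "inS T E h"
  shows "inspan Z B (\<lambda>v. A v^N * h v)"
proof -
  obtain d where d: "\<forall>v. h v = (\<Sum>\<beta>\<in>BoxT T E. d \<beta> * mon \<beta> v)" using assms(4) by (rule inS_elim)
  have "inspan Z B (\<lambda>v. \<Sum>\<beta>\<in>BoxT T E. d \<beta> * (A v^N * mon \<beta> v))"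
    by (rule inspan_lin[OF assms(2) finite_BoxT[OF assms(1)]]) (use assms(3) in simp)
  then show ?thesis by (rule inspan_cong[rotated]) (simp add: d sum_distrib_left mult_ac)
qed

lemma Good_step:
  assumes pr: "prime_set Z" and T6: "T \<subseteq> {..<6}" and u6: "u < 6" and uT: "u \<notin> T"
    and al: "alg Z T u" and G: "Good Z T k"
  shows "Good Z (insert u T) k"
proof -
  have fT: "finite T" using T6 finite_subset by blast
  obtain m e c where c: "\<forall>l\<le>m. inS T e (c l)" and nv: "\<not> van Z (c m)"
    and rel: "\<forall>v\<in>Z. (\<Sum>l\<le>m. c l v * (v!u)^l) = 0"
    using al unfolding alg_def by blast
  have m0: "0 < m"
  proof (rule ccontr)
    assume "\<not> 0 < m"
    then have "m = 0" by simp
    then have "van Z (c m)" using rel unfolding van_def by simp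
    then show False using nv by simp
  qed
  obtain A C where A: "poly_fun 6 A" "\<not> van Z A" and GD: "\<forall>D. \<exists>N B. finite B \<and> card B \<le> C*(D+1)^k \<and>
      (\<forall>\<alpha>\<in>BoxT T D. inspan Z B (\<lambda>v. A v^N * mon \<alpha> v))"
    using G unfolding Good_def by blast
  define a where "a = c m"
  have ia: "inS T e a" using c a_def by simp
  have pa: "poly_fun 6 a" using ia by (rule poly_fun_inS)
  have key: "\<exists>N B. finite B \<and> card B \<le> (m * C * (2*e+1)^k) * (D+1)^k \<and>
      (\<forall>\<alpha>\<in>BoxT (insert u T) D. inspan Z B (\<lambda>v. (A v * a v)^N * mon \<alpha> v))" for D
  proof -
    define E where "E = 2*D*e + D"
    obtain N B where B: "finite B" "card B \<le> C*(E+1)^k" "\<forall>\<beta>\<in>BoxT T E. inspan Z B (\<lambda>v. A v^N * mon \<beta> v)"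
      using GD by blast
    define B' where "B' = (\<lambda>bl v. (v!u)^(snd bl) * fst bl v) ` (B \<times> {..<m})"
    define B'' where "B'' = (\<lambda>b v. (A v ^ D * a v ^ N) * b v) ` B'"
    have fB': "finite B'" unfolding B'_def using B(1) by simp
    have fB'': "finite B''" unfolding B''_def using fB' by simp
    have cB'': "card B'' \<le> card B * m"
    proof -
      have "card B'' \<le> card B'" unfolding B''_def by (rule card_image_le[OF fB'])
      also have "\<dots> \<le> card (B \<times> {..<m})" unfolding B'_def by (rule card_image_le) (use B(1) in simp)
      also have "\<dots> = card B * m" by (simp add: card_cartesian_product)
      finally show ?thesis .
    qed
    have main: "inspan Z B'' (\<lambda>v. (A v * a v)^(N+D) * mon \<alpha> v)" if \<alpha>: "\<alpha> \<in> BoxT (insert u T) D" for \<alpha>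
    proof -
      define j where "j = \<alpha> u"
      define \<alpha>' where "\<alpha>' = \<alpha>(u:=0)"
      have \<alpha>': "\<alpha>' \<in> BoxT T D" using \<alpha> uT unfolding \<alpha>'_def BoxT_def by auto
      have j: "j \<le> D" using \<alpha> unfolding j_def BoxT_def by auto
      have r1: "repW Z T u m (j*e) (\<lambda>v. a v^j * (v!u)^j)"
        unfolding a_def by (rule reduction[OF fT c rel m0])
      have i1: "inS T ((D-j)*e + D) (\<lambda>v. a v^(D-j) * mon \<alpha>' v)"
        by (rule inS_mult[OF fT inS_pow[OF fT ia] inS_mono_elem[OF fT \<alpha>']])
      have "repW Z T u m ((D-j)*e + D + j*e) (\<lambda>v. (a v^(D-j) * mon \<alpha>' v) * (a v^j * (v!u)^j))"
        by (rule repW_mul[OF fT i1 r1])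
      moreover have "(D-j)*e + D + j*e \<le> E"
      proof -
        have "(D-j)*e + j*e = D*e" using j by (simp add: add_mult_distrib[symmetric])
        then show ?thesis unfolding E_def by simp
      qed
      ultimately have r2: "repW Z T u m E (\<lambda>v. (a v^(D-j) * mon \<alpha>' v) * (a v^j * (v!u)^j))"
        using repW_mono[OF _ _ fT] by blast
      have eqa: "a v^D * mon \<alpha> v = (a v^(D-j) * mon \<alpha>' v) * (a v^j * (v!u)^j)" for v
      proof -
        have "a v^D = a v^(D-j) * a v^j" using j by (simp add: power_add[symmetric])
        moreover have "mon \<alpha> v = mon \<alpha>' v * (v!u)^j" unfolding \<alpha>'_def j_def by (rule mon_split[OF u6])
        ultimately show ?thesis by (simp add: mult_ac)
      qed
      obtain h where h: "\<forall>l<m. inS T E (h l)" "\<forall>v\<in>Z. a v^D * mon \<alpha> v = (\<Sum>l<m. h l v * (v!u)^l)"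
        using r2 eqa unfolding repW_def by auto
      have each: "inspan Z B' (\<lambda>v. (v!u)^l * (A v^N * h l v))" if l: "l \<in> {..<m}" for l
      proof -
        have "inspan Z B (\<lambda>v. A v^N * h l v)" using inspan_inS[OF fT B(1) B(3)] h(1) l by simp
        then have "inspan Z ((\<lambda>b v. (v!u)^l * b v) ` B) (\<lambda>v. (v!u)^l * (A v^N * h l v))"
          by (rule inspan_mulfix[OF B(1)])
        moreover have "(\<lambda>b v. (v!u)^l * b v) ` B \<subseteq> B'" unfolding B'_def using l by force
        ultimately show ?thesis using inspan_mono_set[OF fB'] by blast
      qed
      have "inspan Z B' (\<lambda>v. \<Sum>l\<in>{..<m}. 1 * ((v!u)^l * (A v^N * h l v)))"
        by (rule inspan_lin[OF fB']) (use each in auto)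
      then have s: "inspan Z B' (\<lambda>v. A v^N * (a v^D * mon \<alpha> v))"
      proof (rule inspan_cong[rotated])
        fix v assume v: "v \<in> Z"
        have "a v^D * mon \<alpha> v = (\<Sum>l<m. h l v * (v!u)^l)" using h(2) v by blast
        then show "A v^N * (a v^D * mon \<alpha> v) = (\<Sum>l\<in>{..<m}. 1 * ((v!u)^l * (A v^N * h l v)))"
          by (simp add: sum_distrib_left mult_ac)
      qed
      have "inspan Z B'' (\<lambda>v. (A v ^ D * a v ^ N) * (A v^N * (a v^D * mon \<alpha> v)))"
        unfolding B''_def by (rule inspan_mulfix[OF fB' s])
      then show ?thesis by (rule inspan_cong[rotated]) (simp add: power_mult_distrib power_add mult_ac)
    qed
    have "card B'' \<le> (m * C * (2*e+1)^k) * (D+1)^k"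
    proof -
      have "E + 1 \<le> (2*e+1) * (D+1)" unfolding E_def by (simp add: algebra_simps)
      then have "(E+1)^k \<le> ((2*e+1) * (D+1))^k" by (rule power_mono) simp
      then have "(E+1)^k \<le> (2*e+1)^k * (D+1)^k" by (simp only: power_mult_distrib)
      then have "C*(E+1)^k \<le> C*((2*e+1)^k * (D+1)^k)" by simp
      then have "card B \<le> C*((2*e+1)^k * (D+1)^k)" using B(2) by linarith
      then have "card B * m \<le> C*((2*e+1)^k * (D+1)^k) * m" by (rule mult_le_mono1)
      then have x: "card B'' \<le> C*((2*e+1)^k * (D+1)^k) * m" using cB'' by (rule le_trans[rotated])
      have eq: "C*((2*e+1)^k * (D+1)^k) * m = (m * C * (2*e+1)^k) * (D+1)^k" by (simp add: mult_ac)
      show ?thesis using x[unfolded eq] .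
    qed
    then show ?thesis using fB'' main by blast
  qed
  have pA': "poly_fun 6 (\<lambda>v. A v * a v)" using A(1) pa by (rule poly_fun.pf_mult)
  have nA': "\<not> van Z (\<lambda>v. A v * a v)"
    by (rule prime_mult[OF pr A(1) pa A(2)]) (use nv a_def in simp)
  show ?thesis unfolding Good_def using pA' nA' key by blast
qed

definition gmon :: "(nat \<Rightarrow> fn) \<Rightarrow> nat \<Rightarrow> (nat \<Rightarrow> nat) \<Rightarrow> fn" where
  "gmon g r \<alpha> v = (\<Prod>i<r. g i v ^ \<alpha> i)"

definition indep :: "complex list set \<Rightarrow> nat \<Rightarrow> (nat \<Rightarrow> fn) \<Rightarrow> bool" where
  "indep Z r g \<longleftrightarrow> (\<forall>S C. finite S \<longrightarrow> (\<forall>\<alpha>\<in>S. \<forall>i\<ge>r. \<alpha> i = 0) \<longrightarrow>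
      (\<forall>v\<in>Z. (\<Sum>\<alpha>\<in>S. C \<alpha> * gmon g r \<alpha> v) = 0) \<longrightarrow> (\<forall>\<alpha>\<in>S. C \<alpha> = 0))"

lemma indep0:
  assumes "Z \<noteq> {}"
  shows "indep Z 0 g"
  unfolding indep_def
proof (intro allI impI ballI)
  fix S C \<alpha> assume fS: "finite S" and sup: "\<forall>\<alpha>\<in>S. \<forall>i\<ge>0. \<alpha> i = 0"
    and z: "\<forall>v\<in>Z. (\<Sum>\<alpha>\<in>S. C \<alpha> * gmon g 0 \<alpha> v) = 0" and a: "\<alpha> \<in> S"
  have a0: "\<alpha> = (\<lambda>_. 0)" using sup a by auto
  have "S = {\<alpha>}" using sup a0 a by fastforce
  obtain v where "v \<in> Z" using assms by blast
  then have "(\<Sum>\<alpha>\<in>S. C \<alpha> * gmon g 0 \<alpha> v) = 0" using z by blast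
  then have "C \<alpha> * gmon g 0 \<alpha> v = 0" using \<open>S = {\<alpha>}\<close> by simp
  then show "C \<alpha> = 0" by (simp add: gmon_def)
qed

lemma gmon_Suc: "gmon g (Suc r) \<alpha> v = gmon g r \<alpha> v * g r v ^ \<alpha> r"
  unfolding gmon_def by simp

lemma gmon_cong: "(\<And>i. i < r \<Longrightarrow> g i = g' i) \<Longrightarrow> gmon g r \<alpha> = gmon g' r \<alpha>"
  unfolding gmon_def by (auto intro!: prod.cong)

lemma gmon_cong2: "(\<And>i. i < r \<Longrightarrow> \<alpha> i = \<alpha>' i) \<Longrightarrow> gmon g r \<alpha> = gmon g r \<alpha>'"
  unfolding gmon_def by (auto intro!: prod.cong)

lemma poly_fun_gmon: "(\<And>i. i < r \<Longrightarrow> poly_fun 6 (g i)) \<Longrightarrow> poly_fun 6 (gmon g r \<alpha>)"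
  unfolding gmon_def by (rule poly_fun_prod) (auto intro: poly_fun_pow)

lemma chain_step:
  assumes pr: "prime_set Z'" and sub: "Z \<subseteq> Z'" and ind: "indep Z r g"
    and vp: "van Z p" and nvp: "\<not> van Z' p" and pp: "poly_fun 6 p" and pg: "\<forall>i<r. poly_fun 6 (g i)"
  shows "indep Z' (Suc r) (g(r:=p))"
proof -
  define G where "G = g(r:=p)"
  have pG: "poly_fun 6 (G i)" if "i < Suc r" for i using pg pp that unfolding G_def by auto
  have gmG: "gmon G (Suc r) \<alpha> v = gmon g r \<alpha> v * p v ^ \<alpha> r" for \<alpha> v
  proof -
    have "gmon G r \<alpha> = gmon g r \<alpha>" by (rule gmon_cong) (simp add: G_def)
    then show ?thesis by (simp add: gmon_Suc G_def)
  qed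
  have main: "\<forall>S C. finite S \<longrightarrow> (\<forall>\<alpha>\<in>S. \<forall>i\<ge>Suc r. \<alpha> i = 0) \<longrightarrow> (\<forall>\<alpha>\<in>S. \<alpha> r \<le> d) \<longrightarrow>
      (\<forall>v\<in>Z'. (\<Sum>\<alpha>\<in>S. C \<alpha> * gmon G (Suc r) \<alpha> v) = 0) \<longrightarrow> (\<forall>\<alpha>\<in>S. C \<alpha> = 0)" for d
  proof (induction d)
    case 0
    show ?case
    proof (intro allI impI)
      fix S C assume fS: "finite S" and sup: "\<forall>\<alpha>\<in>S. \<forall>i\<ge>Suc r. \<alpha> i = 0" and d: "\<forall>\<alpha>\<in>S. \<alpha> r \<le> 0"
        and z: "\<forall>v\<in>Z'. (\<Sum>\<alpha>\<in>S. C \<alpha> * gmon G (Suc r) \<alpha> v) = 0"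
      have sup': "\<forall>\<alpha>\<in>S. \<forall>i\<ge>r. \<alpha> i = 0" using sup d by (metis le_0_eq le_eq_less_or_eq Suc_le_eq)
      have "\<forall>v\<in>Z. (\<Sum>\<alpha>\<in>S. C \<alpha> * gmon g r \<alpha> v) = 0"
      proof
        fix v assume v: "v \<in> Z"
        have "(\<Sum>\<alpha>\<in>S. C \<alpha> * gmon g r \<alpha> v) = (\<Sum>\<alpha>\<in>S. C \<alpha> * gmon G (Suc r) \<alpha> v)"
        proof (rule sum.cong[OF refl])
          fix \<alpha> assume "\<alpha> \<in> S"
          then have "\<alpha> r = 0" using d by auto
          then show "C \<alpha> * gmon g r \<alpha> v = C \<alpha> * gmon G (Suc r) \<alpha> v" by (simp add: gmG)
        qed
        then show "(\<Sum>\<alpha>\<in>S. C \<alpha> * gmon g r \<alpha> v) = 0" using z v sub by auto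
      qed
      then show "\<forall>\<alpha>\<in>S. C \<alpha> = 0" using ind fS sup' unfolding indep_def by blast
    qed
  next
    case (Suc d)
    show ?case
    proof (intro allI impI)
      fix S C assume fS: "finite S" and sup: "\<forall>\<alpha>\<in>S. \<forall>i\<ge>Suc r. \<alpha> i = 0" and dd: "\<forall>\<alpha>\<in>S. \<alpha> r \<le> Suc d"
        and z: "\<forall>v\<in>Z'. (\<Sum>\<alpha>\<in>S. C \<alpha> * gmon G (Suc r) \<alpha> v) = 0"
      define S0 where "S0 = {\<alpha>\<in>S. \<alpha> r = 0}"
      have fS0: "finite S0" using fS S0_def by simp
      have sup0: "\<forall>\<alpha>\<in>S0. \<forall>i\<ge>r. \<alpha> i = 0" using sup unfolding S0_def by (metis (mono_tags, lifting) le_eq_less_or_eq Suc_le_eq mem_Collect_eq)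
      have zZ: "\<forall>v\<in>Z. (\<Sum>\<alpha>\<in>S0. C \<alpha> * gmon g r \<alpha> v) = 0"
      proof
        fix v assume v: "v \<in> Z"
        have pv: "p v = 0" using vp v unfolding van_def by auto
        have "(\<Sum>\<alpha>\<in>S. C \<alpha> * gmon G (Suc r) \<alpha> v) = (\<Sum>\<alpha>\<in>S0. C \<alpha> * gmon G (Suc r) \<alpha> v)"
        proof (rule sum.mono_neutral_right[OF fS])
          show "S0 \<subseteq> S" unfolding S0_def by auto
          show "\<forall>i\<in>S - S0. C i * gmon G (Suc r) i v = 0" unfolding S0_def by (auto simp: gmG pv)
        qed
        also have "\<dots> = (\<Sum>\<alpha>\<in>S0. C \<alpha> * gmon g r \<alpha> v)"
          by (rule sum.cong[OF refl]) (simp add: gmG S0_def)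
        finally show "(\<Sum>\<alpha>\<in>S0. C \<alpha> * gmon g r \<alpha> v) = 0" using z v sub by auto
      qed
      have C0: "\<forall>\<alpha>\<in>S0. C \<alpha> = 0" using ind fS0 sup0 zZ unfolding indep_def by blast
      define dn where "dn = (\<lambda>\<alpha>::nat\<Rightarrow>nat. \<alpha>(r := \<alpha> r - 1))"
      define up where "up = (\<lambda>\<beta>::nat\<Rightarrow>nat. \<beta>(r := \<beta> r + 1))"
      define S1 where "S1 = dn ` (S - S0)"
      define C1 where "C1 = (\<lambda>\<beta>. C (up \<beta>))"
      have updn: "up (dn \<alpha>) = \<alpha>" if "\<alpha> \<in> S - S0" for \<alpha>
        using that unfolding up_def dn_def S0_def by (auto simp: fun_eq_iff)
      have inj: "inj_on dn (S - S0)" by (metis inj_on_inverseI updn)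
      have fS1: "finite S1" using fS unfolding S1_def by simp
      have gup: "gmon G (Suc r) (up \<beta>) v = gmon G (Suc r) \<beta> v * p v" for \<beta> v
      proof -
        have "gmon g r (up \<beta>) = gmon g r \<beta>" by (rule gmon_cong2) (simp add: up_def)
        then show ?thesis by (simp add: gmG up_def mult_ac)
      qed
      have sum1: "(\<Sum>\<alpha>\<in>S. C \<alpha> * gmon G (Suc r) \<alpha> v) = p v * (\<Sum>\<beta>\<in>S1. C1 \<beta> * gmon G (Suc r) \<beta> v)" for v
      proof -
        have "(\<Sum>\<alpha>\<in>S. C \<alpha> * gmon G (Suc r) \<alpha> v) = (\<Sum>\<alpha>\<in>S - S0. C \<alpha> * gmon G (Suc r) \<alpha> v)"
          by (rule sum.mono_neutral_right[OF fS]) (use C0 in auto)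
        also have "\<dots> = (\<Sum>\<alpha>\<in>S - S0. C (up (dn \<alpha>)) * gmon G (Suc r) (up (dn \<alpha>)) v)"
          by (rule sum.cong[OF refl]) (simp add: updn)
        also have "\<dots> = (\<Sum>\<beta>\<in>S1. C (up \<beta>) * gmon G (Suc r) (up \<beta>) v)"
          unfolding S1_def by (rule sum.reindex[OF inj, symmetric, unfolded comp_def])
        also have "\<dots> = p v * (\<Sum>\<beta>\<in>S1. C1 \<beta> * gmon G (Suc r) \<beta> v)"
          by (simp add: gup C1_def sum_distrib_left mult_ac)
        finally show ?thesis .
      qed
      define E1 where "E1 = (\<lambda>v. \<Sum>\<beta>\<in>S1. C1 \<beta> * gmon G (Suc r) \<beta> v)"
      have pE1: "poly_fun 6 E1" unfolding E1_def
        by (rule poly_fun_sum) (intro poly_fun.pf_mult poly_fun.pf_const poly_fun_gmon pG)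
      have "van Z' (\<lambda>v. p v * E1 v)" using z sum1 unfolding van_def E1_def by auto
      then have vE1: "van Z' E1" using pr pp pE1 nvp unfolding prime_set_def by blast
      have sup1: "\<forall>\<beta>\<in>S1. \<forall>i\<ge>Suc r. \<beta> i = 0" using sup unfolding S1_def dn_def by auto
      have d1: "\<forall>\<beta>\<in>S1. \<beta> r \<le> d" using dd unfolding S1_def dn_def S0_def by auto
      have "\<forall>\<beta>\<in>S1. C1 \<beta> = 0" using Suc.IH fS1 sup1 d1 vE1 unfolding van_def E1_def by blast
      then have "\<forall>\<alpha>\<in>S - S0. C \<alpha> = 0" unfolding S1_def C1_def using updn by force
      then show "\<forall>\<alpha>\<in>S. C \<alpha> = 0" using C0 by blast
    qed
  qed
  show ?thesis unfolding indep_def G_def[symmetric]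
  proof (intro allI impI)
    fix S C assume fS: "finite S" and sup: "\<forall>\<alpha>\<in>S. \<forall>i\<ge>Suc r. \<alpha> i = 0"
      and z: "\<forall>v\<in>Z'. (\<Sum>\<alpha>\<in>S. C \<alpha> * gmon G (Suc r) \<alpha> v) = 0"
    have "\<forall>\<alpha>\<in>S. \<alpha> r \<le> Max ((\<lambda>\<alpha>. \<alpha> r) ` S)" using fS by auto
    then show "\<forall>\<alpha>\<in>S. C \<alpha> = 0" using main fS sup z by blast
  qed
qed

lemma no4:
  assumes pr: "prime_set Z" and G: "Good Z {..<6} 3" and pg: "\<forall>i<4. poly_fun 6 (g i)"
  shows "\<not> indep Z 4 g"
proof
  assume ind: "indep Z 4 g"
  have "\<forall>i\<in>{..<4}. \<exists>D. inS {..<6} D (g i)" using pg inS_poly_fun by auto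
  from bchoice[OF this] obtain Dg where Dg: "\<forall>i\<in>{..<4}. inS {..<6} (Dg i) (g i)" by blast
  define e where "e = (\<Sum>i<4. Dg i)"
  have ge: "inS {..<6} e (g i)" if "i < 4" for i
  proof -
    have "Dg i \<le> e" unfolding e_def using that by (intro member_le_sum) auto
    moreover have "inS {..<6} (Dg i) (g i)" using Dg that by simp
    ultimately show ?thesis using inS_mono[of "{..<6}" "Dg i" "g i" "{..<6}" e] by simp
  qed
  obtain A C0 where A: "poly_fun 6 A" "\<not> van Z A" and GD: "\<forall>D. \<exists>N B. finite B \<and> card B \<le> C0*(D+1)^3 \<and>
      (\<forall>\<alpha>\<in>BoxT {..<6} D. inspan Z B (\<lambda>v. A v^N * mon \<alpha> v))"
    using G unfolding Good_def by blast
  define D where "D = C0 * (4*e+1)^3"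
  define S where "S = BoxT {..<4} D"
  have fS: "finite S" unfolding S_def by (simp add: finite_BoxT)
  have cS: "card S = (D+1)^4" unfolding S_def by (simp add: card_BoxT)
  obtain N B where B: "finite B" "card B \<le> C0*(4*D*e+1)^3"
    "\<forall>\<alpha>\<in>BoxT {..<6} (4*D*e). inspan Z B (\<lambda>v. A v^N * mon \<alpha> v)"
    using GD by blast
  have hS: "inS {..<6} (4*D*e) (gmon g 4 \<beta>)" if b: "\<beta> \<in> S" for \<beta>
  proof -
    have "inS {..<6} (\<Sum>i<4. \<beta> i * e) (\<lambda>v. \<Prod>i<4. g i v ^ \<beta> i)"
      by (rule inS_prod) (auto intro!: inS_pow ge)
    moreover have "(\<Sum>i<4. \<beta> i * e) \<le> (\<Sum>i<(4::nat). D * e)"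
      by (rule sum_mono) (use b in \<open>auto simp: S_def BoxT_def\<close>)
    ultimately show ?thesis unfolding gmon_def
      by (elim inS_mono) (auto simp: mult_ac)
  qed
  have "\<forall>\<beta>\<in>S. inspan Z B (\<lambda>v. A v^N * gmon g 4 \<beta> v)"
    using inspan_inS[OF finite_lessThan B(1) B(3)] hS by blast
  then have "\<forall>\<beta>\<in>S. \<exists>c. \<forall>v\<in>Z. A v^N * gmon g 4 \<beta> v = (\<Sum>b\<in>B. c b * b v)"
    unfolding inspan_def by blast
  from bchoice[OF this] obtain M where M: "\<forall>\<beta>\<in>S. \<forall>v\<in>Z. A v^N * gmon g 4 \<beta> v = (\<Sum>b\<in>B. M \<beta> b * b v)"
    by blast
  have "card B < card S"
  proof -
    have "4*D*e + 1 \<le> (4*e+1)*(D+1)" by (simp add: algebra_simps)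
    then have "(4*D*e+1)^3 \<le> ((4*e+1)*(D+1))^3" by (rule power_mono) simp
    then have "C0*(4*D*e+1)^3 \<le> C0*((4*e+1)*(D+1))^3" by simp
    also have "\<dots> = (C0*(4*e+1)^3) * (D+1)^3" by (simp only: power_mult_distrib mult.assoc)
    also have "\<dots> = D * (D+1)^3" by (simp only: D_def[symmetric])
    also have "\<dots> < (D+1)^4"
    proof -
      have "(D+1)^4 = (D+1) * (D+1)^3" by (simp add: power_Suc[symmetric] del: power_Suc)
      moreover have "D * (D+1)^3 < (D+1) * (D+1)^3" by (rule mult_strict_right_mono) simp_all
      ultimately show ?thesis by simp
    qed
    finally show ?thesis using B(2) cS by linarith
  qed
  from lin_dep[OF B(1) fS this, of M] obtain l where
    l: "\<exists>\<beta>\<in>S. l \<beta> \<noteq> 0" "\<forall>b\<in>B. (\<Sum>\<beta>\<in>S. l \<beta> * M \<beta> b) = 0" by blast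
  define Q where "Q = (\<lambda>v. \<Sum>\<beta>\<in>S. l \<beta> * gmon g 4 \<beta> v)"
  have pQ: "poly_fun 6 Q" unfolding Q_def
    by (rule poly_fun_sum) (intro poly_fun.pf_mult poly_fun.pf_const poly_fun_gmon, use pg in auto)
  have "van Z (\<lambda>v. (A v^N) * Q v)"
    unfolding van_def
  proof
    fix v assume v: "v \<in> Z"
    have "A v^N * Q v = (\<Sum>\<beta>\<in>S. l \<beta> * (A v^N * gmon g 4 \<beta> v))"
      unfolding Q_def by (simp add: sum_distrib_left mult_ac)
    also have "\<dots> = (\<Sum>\<beta>\<in>S. l \<beta> * (\<Sum>b\<in>B. M \<beta> b * b v))"
      by (rule sum.cong[OF refl]) (use M v in auto)
    also have "\<dots> = (\<Sum>b\<in>B. (\<Sum>\<beta>\<in>S. l \<beta> * M \<beta> b) * b v)"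
      by (simp add: sum_distrib_left sum_distrib_right sum.swap[of _ S] mult_ac)
    also have "\<dots> = 0" using l(2) by simp
    finally show "A v^N * Q v = 0" .
  qed
  moreover have "\<not> van Z (\<lambda>v. A v^N)" by (rule prime_pow[OF pr A])
  ultimately have "van Z Q" using pr poly_fun_pow[OF A(1)] pQ unfolding prime_set_def by blast
  then have "\<forall>v\<in>Z. (\<Sum>\<beta>\<in>S. l \<beta> * gmon g 4 \<beta> v) = 0" unfolding van_def Q_def by simp
  moreover have "\<forall>\<beta>\<in>S. \<forall>i\<ge>4. \<beta> i = 0" unfolding S_def BoxT_def by auto
  ultimately have "\<forall>\<beta>\<in>S. l \<beta> = 0" using ind fS unfolding indep_def by blast
  then show False using l(1) by blast
qed

lemma dim_bound:
  assumes GEO: "\<And>Z. zariski_irreducible 6 Z \<Longrightarrow> Z \<subseteq> CL \<Longrightarrow> Good Z {..<6} 3"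
  shows "zariski_dim 6 CL \<le> 3"
  unfolding zariski_dim_def
proof (rule Sup_least)
  fix x assume "x \<in> {enat k |k. \<exists>Z. (\<forall>i\<le>k. zariski_irreducible 6 (Z i) \<and> Z i \<subseteq> CL) \<and> (\<forall>i<k. Z i \<subset> Z (Suc i))}"
  then obtain k Z where x: "x = enat k" and Z: "\<forall>i\<le>k. zariski_irreducible 6 (Z i) \<and> Z i \<subseteq> CL"
    and ch: "\<forall>i<k. Z i \<subset> Z (Suc i)" by blast
  show "x \<le> 3"
  proof (rule ccontr)
    assume "\<not> x \<le> 3"
    then have k4: "4 \<le> k" using x by (simp add: numeral_eq_enat)
    have build: "\<exists>g. indep (Z i) i g \<and> (\<forall>j<i. poly_fun 6 (g j))" if "i \<le> 4" for i
      using that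
    proof (induction i)
      case 0
      have "Z 0 \<noteq> {}" using Z unfolding zariski_irreducible_def by auto
      then show ?case using indep0 by blast
    next
      case (Suc i)
      then obtain g where g: "indep (Z i) i g" "\<forall>j<i. poly_fun 6 (g j)" by auto
      have ik: "i < k" using Suc.prems k4 by simp
      have ss: "Z i \<subset> Z (Suc i)" using ch ik by blast
      have cl: "zariski_closed 6 (Z i)" using Z ik unfolding zariski_irreducible_def by auto
      then obtain P where P: "\<forall>p\<in>P. poly_fun 6 p" "Z i = {v. length v = 6 \<and> (\<forall>p\<in>P. p v = 0)}"
        unfolding zariski_closed_def by blast
      obtain w where w: "w \<in> Z (Suc i)" "w \<notin> Z i" using ss by blast
      have cl2: "zariski_closed 6 (Z (Suc i))" using Z ik unfolding zariski_irreducible_def by auto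
      have "length w = 6" using closed_len[OF cl2 w(1)] .
      then obtain p where p: "p \<in> P" "p w \<noteq> 0" using w(2) P(2) by blast
      have vp: "van (Z i) p" using P(2) p(1) unfolding van_def by blast
      have nvp: "\<not> van (Z (Suc i)) p" using w(1) p(2) unfolding van_def by blast
      have pr: "prime_set (Z (Suc i))" using Z ik irr_prime by auto
      have "indep (Z (Suc i)) (Suc i) (g(i:=p))"
        by (rule chain_step[OF pr _ g(1) vp nvp]) (use ss P p g in auto)
      moreover have "\<forall>j<Suc i. poly_fun 6 ((g(i:=p)) j)" using g P p by (auto simp: less_Suc_eq)
      ultimately show ?case by blast
    qed
    obtain g where g: "indep (Z 4) 4 g" "\<forall>j<4. poly_fun 6 (g j)" using build by blast
    have "zariski_irreducible 6 (Z 4)" "Z 4 \<subseteq> CL" using Z k4 by auto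
    then have "prime_set (Z 4)" "Good (Z 4) {..<6} 3" using irr_prime GEO by auto
    then show False using no4 g by blast
  qed
qed

definition inSx :: "nat set \<Rightarrow> fn \<Rightarrow> bool" where
  "inSx T f \<longleftrightarrow> (\<exists>E. inS T E f)"

lemma inSx_const: "finite T \<Longrightarrow> inSx T (\<lambda>v. c)"
  unfolding inSx_def using inS_const by blast

lemma inSx_mult: "finite T \<Longrightarrow> inSx T f \<Longrightarrow> inSx T g \<Longrightarrow> inSx T (\<lambda>v. f v * g v)"
  unfolding inSx_def using inS_mult by blast

lemma inSx_add: "finite T \<Longrightarrow> inSx T f \<Longrightarrow> inSx T g \<Longrightarrow> inSx T (\<lambda>v. f v + g v)"
  unfolding inSx_def
proof -
  assume fT: "finite T" and "\<exists>E. inS T E f" "\<exists>E. inS T E g"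
  then obtain E1 E2 where "inS T E1 f" "inS T E2 g" by blast
  then have "inS T (max E1 E2) f" "inS T (max E1 E2) g" using inS_mono[OF _ order_refl _ fT] by auto
  then show "\<exists>E. inS T E (\<lambda>v. f v + g v)" using inS_add by blast
qed

lemma inSx_pow: "finite T \<Longrightarrow> inSx T f \<Longrightarrow> inSx T (\<lambda>v. f v ^ n)"
  unfolding inSx_def using inS_pow by blast

lemma inSx_sum: "finite T \<Longrightarrow> (\<And>k. k \<in> K \<Longrightarrow> inSx T (f k)) \<Longrightarrow> inSx T (\<lambda>v. \<Sum>k\<in>K. f k v)"
proof (induction K rule: infinite_finite_induct)
  case (infinite K) then show ?case using inSx_const by simp
next
  case empty then show ?case using inSx_const by simp
next
  case (insert x F) then show ?case by (simp add: inSx_add)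
qed

lemma inSx_poly: "finite T \<Longrightarrow> i \<in> T \<Longrightarrow> i < 6 \<Longrightarrow> inSx T (\<lambda>v. poly p (v!i))"
  unfolding inSx_def using inS_poly by blast

lemma inSx_var: "finite T \<Longrightarrow> i \<in> T \<Longrightarrow> i < 6 \<Longrightarrow> inSx T (\<lambda>v. v!i)"
  unfolding inSx_def using inS_var by blast

lemma inSx_mono: "inSx T f \<Longrightarrow> T \<subseteq> T' \<Longrightarrow> finite T' \<Longrightarrow> inSx T' f"
  unfolding inSx_def using inS_mono[OF _ _ order_refl] by blast

lemma inSx_poly_fun: "inSx T f \<Longrightarrow> poly_fun 6 f"
  unfolding inSx_def using poly_fun_inS by blast

lemma alg_introx:
  assumes "finite T" "\<forall>l\<le>m. inSx T (c l)" "\<exists>l\<le>m. \<not> van Z (c l)"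
    and "\<forall>v\<in>Z. (\<Sum>l\<le>m. c l v * (v!u)^l) = 0"
  shows "alg Z T u"
proof -
  have "\<forall>l\<in>{..m}. \<exists>E. inS T E (c l)" using assms(2) unfolding inSx_def by auto
  from bchoice[OF this] obtain E where E: "\<forall>l\<in>{..m}. inS T (E l) (c l)" by blast
  define e where "e = (\<Sum>l\<le>m. E l)"
  have "\<forall>l\<le>m. inS T e (c l)"
  proof (intro allI impI)
    fix l assume l: "l \<le> m"
    have "E l \<le> e" unfolding e_def using l by (intro member_le_sum) auto
    then show "inS T e (c l)" using E l inS_mono[OF _ order_refl _ assms(1)] by auto
  qed
  then show ?thesis using alg_intro assms(3,4) by blast
qed

definition evxy :: "complex poly poly \<Rightarrow> complex \<Rightarrow> complex \<Rightarrow> complex" where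
  "evxy q x y = poly (poly q [:y:]) x"

lemma evxy_expand: "evxy q x y = (\<Sum>k\<le>degree q. poly (coeff q k) x * y^k)"
proof -
  have "poly q [:y:] = (\<Sum>k\<le>degree q. coeff q k * [:y:]^k)" by (rule poly_altdef)
  then show ?thesis unfolding evxy_def by (simp add: poly_sum poly_power)
qed

lemma eval3_expand: "eval3 F x y z = (\<Sum>l\<le>degree F. evxy (coeff F l) x y * z^l)"
proof -
  have "poly F [:[:z:]:] = (\<Sum>l\<le>degree F. coeff F l * [:[:z:]:]^l)" by (rule poly_altdef)
  then show ?thesis unfolding eval3_def evxy_def by (simp add: poly_sum poly_power)
qed

lemma eval3_add: "eval3 (A + B) x y z = eval3 A x y z + eval3 B x y z"
  unfolding eval3_def by simp
lemma eval3_mult: "eval3 (A * B) x y z = eval3 A x y z * eval3 B x y z"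
  unfolding eval3_def by simp
lemma eval3_const: "eval3 [:R:] x y z = evxy R x y"
  unfolding eval3_def evxy_def by simp
lemma evxy_sum: "evxy (\<Sum>f\<in>S. g f) x y = (\<Sum>f\<in>S. evxy (g f) x y)"
  unfolding evxy_def by (simp add: poly_sum)
lemma evxy_mult: "evxy (A * B) x y = evxy A x y * evxy B x y"
  unfolding evxy_def by simp
lemma evxy_const: "evxy [:r:] x y = poly r x"
  unfolding evxy_def by simp

lemma inSx_evxy:
  assumes "finite T" "i \<in> T" "j \<in> T" "i < 6" "j < 6"
  shows "inSx T (\<lambda>v. evxy q (v!i) (v!j))"
  unfolding evxy_expand
  by (intro inSx_sum inSx_mult inSx_poly inSx_pow inSx_var assms)

lemma inSx_eval3:
  assumes "finite T" "i \<in> T" "j \<in> T" "k \<in> T" "i < 6" "j < 6" "k < 6"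
  shows "inSx T (\<lambda>v. eval3 F (v!i) (v!j) (v!k))"
  unfolding eval3_expand
  by (intro inSx_sum inSx_mult inSx_evxy inSx_pow inSx_var assms)

section \<open>Polynomial algebra\<close>

lemma degree_map_poly_le': "f 0 = 0 \<Longrightarrow> degree (map_poly f p) \<le> degree p"
  by (rule degree_le) (auto simp: coeff_map_poly coeff_eq_0)

lemma map_poly_dvd_self:
  fixes F :: "'a::idom poly"
  assumes "map_poly \<phi> F = F * H" "\<phi> 0 = 0" "map_poly \<phi> F \<noteq> 0"
  shows "\<exists>h. (\<forall>l. \<phi> (coeff F l) = h * coeff F l) \<and> (\<exists>l. \<phi> (coeff F l) \<noteq> 0)"
proof -
  have F0: "F \<noteq> 0" using assms(1,3) by auto
  have H0: "H \<noteq> 0" using assms(1,3) by auto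
  have "degree F + degree H = degree (map_poly \<phi> F)" using assms(1) degree_mult_eq[OF F0 H0] by simp
  also have "\<dots> \<le> degree F" by (rule degree_map_poly_le'[of \<phi> F, OF assms(2)])
  finally have "degree H = 0" by simp
  then have Hc: "H = [:coeff H 0:]" by (rule degree_0_id[symmetric])
  have "\<forall>l. \<phi> (coeff F l) = coeff H 0 * coeff F l"
  proof
    fix l
    have "coeff (map_poly \<phi> F) l = coeff (F * [:coeff H 0:]) l" using assms(1) Hc by metis
    then show "\<phi> (coeff F l) = coeff H 0 * coeff F l" by (simp add: coeff_map_poly assms(2) mult.commute)
  qed
  moreover have "\<exists>l. \<phi> (coeff F l) \<noteq> 0"
  proof (rule ccontr)
    assume "\<not> (\<exists>l. \<phi> (coeff F l) \<noteq> 0)"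
    then have "map_poly \<phi> F = 0" by (simp add: poly_eq_iff coeff_map_poly assms(2))
    then show False using assms(3) by simp
  qed
  ultimately show ?thesis by blast
qed

lemma pderiv_absurd:
  fixes f :: "'a::{idom,ring_char_0} poly"
  assumes "pderiv f = h * f" "pderiv f \<noteq> 0"
  shows False
proof -
  have d: "degree f \<noteq> 0" using assms(2) pderiv_eq_0_iff by blast
  then have f0: "f \<noteq> 0" by auto
  have h0: "h \<noteq> 0" using assms by auto
  have "degree (h * f) = degree h + degree f" by (rule degree_mult_eq[OF h0 f0])
  moreover have "degree (pderiv f) = degree f - 1" by (rule degree_pderiv)
  ultimately show False using assms(1) d by simp
qed

lemma ndv3:
  fixes F :: "complex poly poly poly"
  assumes "pd3 F \<noteq> 0"
  shows "\<not> F dvd pd3 F"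
proof
  assume "F dvd pd3 F"
  then have "degree F \<le> degree (pderiv F)" using assms dvd_imp_degree_le unfolding pd3_def by blast
  moreover have "degree F \<noteq> 0" using assms pderiv_eq_0_iff unfolding pd3_def by blast
  moreover have "degree (pderiv F) = degree F - 1" by (rule degree_pderiv)
  ultimately show False by simp
qed

lemma ndv2:
  fixes F :: "complex poly poly poly"
  assumes "pd2 F \<noteq> 0"
  shows "\<not> F dvd pd2 F"
proof
  assume "F dvd pd2 F"
  then obtain H where H: "map_poly pderiv F = F * H" unfolding pd2_def by (auto elim: dvdE)
  have "\<exists>h. (\<forall>l. pderiv (coeff F l) = h * coeff F l) \<and> (\<exists>l. pderiv (coeff F l) \<noteq> 0)"
    by (rule map_poly_dvd_self[OF H]) (use assms in \<open>simp_all add: pd2_def\<close>)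
  then obtain h l where h: "\<forall>l. pderiv (coeff F l) = h * coeff F l" and l: "pderiv (coeff F l) \<noteq> 0"
    by blast
  show False using pderiv_absurd h l by blast
qed

lemma ndv1:
  fixes F :: "complex poly poly poly"
  assumes "pd1 F \<noteq> 0"
  shows "\<not> F dvd pd1 F"
proof
  assume "F dvd pd1 F"
  then obtain H where H: "map_poly (map_poly pderiv) F = F * H" unfolding pd1_def by (auto elim: dvdE)
  have "\<exists>h. (\<forall>l. map_poly pderiv (coeff F l) = h * coeff F l) \<and> (\<exists>l. map_poly pderiv (coeff F l) \<noteq> 0)"
    by (rule map_poly_dvd_self[OF H]) (use assms in \<open>simp_all add: pd1_def\<close>)
  then obtain h l where h: "\<forall>l. map_poly pderiv (coeff F l) = h * coeff F l"
    and l: "map_poly pderiv (coeff F l) \<noteq> 0" by blast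
  have "map_poly pderiv (coeff F l) = coeff F l * h" using h by (simp add: mult.commute)
  then have "\<exists>h'. (\<forall>t. pderiv (coeff (coeff F l) t) = h' * coeff (coeff F l) t) \<and> (\<exists>t. pderiv (coeff (coeff F l) t) \<noteq> 0)"
    by (rule map_poly_dvd_self) (use l in simp_all)
  then obtain h' t where h': "\<forall>t. pderiv (coeff (coeff F l) t) = h' * coeff (coeff F l) t"
    and t: "pderiv (coeff (coeff F l) t) \<noteq> 0" by blast
  show False using pderiv_absurd h' t by blast
qed

lemma content_unit:
  fixes F :: "complex poly poly poly"
  assumes "irreducible F" "degree F \<noteq> 0" "\<forall>l. d dvd coeff F l"
  shows "is_unit d"
proof -
  have "[:d:] dvd F" using assms(3) const_poly_dvd_iff by blast
  then obtain F' where F': "F = [:d:] * F'" by (auto elim: dvdE)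
  then have "is_unit [:d:] \<or> is_unit F'" using assms(1) irreducibleD by blast
  then show ?thesis
  proof
    assume "is_unit [:d:]" then show ?thesis by (simp add: is_unit_const_poly_iff)
  next
    assume "is_unit F'"
    then obtain c where "F' = [:c:]" by (auto elim: is_unit_polyE)
    then have "degree F = 0" using F' by simp
    then show ?thesis using assms(2) by simp
  qed
qed

lemma resG:
  fixes F G :: "complex poly poly poly"
  assumes irr: "irreducible F" and G0: "G \<noteq> 0" and nd: "\<not> F dvd G"
  shows "\<exists>A B R. R \<noteq> 0 \<and> A * F + B * G = [:R:]"
proof -
  have FG: "F \<noteq> G" using nd by auto
  have cop: "\<forall>d. (\<forall>f\<in>{F,G}. d dvd f) \<longrightarrow> is_unit d"
  proof (intro allI impI)
    fix d assume "\<forall>f\<in>{F,G}. d dvd f"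
    then have dF: "d dvd F" and dG: "d dvd G" by auto
    then obtain e where e: "F = d * e" by (auto elim: dvdE)
    then have "is_unit d \<or> is_unit e" using irr irreducibleD by blast
    then show "is_unit d"
    proof
      assume u: "is_unit e"
      have "F dvd d" using e u by (simp add: mult_unit_dvd_iff' dvd_mult_unit_iff)
      then have "F dvd G" using dG by (rule dvd_trans)
      then show ?thesis using nd by simp
    qed
  qed
  obtain l R where lR: "R \<noteq> 0" "(\<Sum>f\<in>{F,G}. l f * f) = [:R:]"
    using CD[of "{F,G}"] cop G0 by auto
  then have "l F * F + l G * G = [:R:]" using FG by simp
  then show ?thesis using lR by blast
qed

lemma Gx:
  fixes p :: "complex poly"
  assumes "p \<noteq> 0" "i < 6" "Z \<noteq> {}" "van Z (\<lambda>v. poly p (v!i))"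
  shows "alg Z {} i"
proof (rule alg_introx[of "{}" "degree p" "\<lambda>l v. coeff p l"])
  show "\<forall>l\<le>degree p. inSx {} (\<lambda>v. coeff p l)" using inSx_const by auto
  show "\<exists>l\<le>degree p. \<not> van Z (\<lambda>v. coeff p l)"
    using assms(1,3) unfolding van_def by (intro exI[of _ "degree p"]) auto
  show "\<forall>v\<in>Z. (\<Sum>l\<le>degree p. coeff p l * (v!i)^l) = 0"
    using assms(4) unfolding van_def by (simp add: poly_altdef)
qed simp

lemma G6:
  fixes q :: "complex poly poly"
  assumes "q \<noteq> 0" "i \<noteq> j" "i < 6" "j < 6" "Z \<noteq> {}" "van Z (\<lambda>v. evxy q (v!i) (v!j))"
  shows "alg Z {i} j \<or> alg Z {} i"
proof (cases "\<exists>l\<le>degree q. \<not> van Z (\<lambda>v. poly (coeff q l) (v!i))")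
  case True
  have "alg Z {i} j"
  proof (rule alg_introx[of "{i}" "degree q" "\<lambda>l v. poly (coeff q l) (v!i)"])
    show "\<forall>l\<le>degree q. inSx {i} (\<lambda>v. poly (coeff q l) (v!i))" using inSx_poly assms(3) by auto
    show "\<forall>v\<in>Z. (\<Sum>l\<le>degree q. poly (coeff q l) (v!i) * (v!j)^l) = 0"
      using assms(6) unfolding van_def by (simp add: evxy_expand)
  qed (use True in auto)
  then show ?thesis by blast
next
  case False
  then have "van Z (\<lambda>v. poly (coeff q (degree q)) (v!i))" by auto
  moreover have "coeff q (degree q) \<noteq> 0" using assms(1) by simp
  ultimately show ?thesis using Gx assms(3,5) by blast
qed

lemma block:
  fixes F :: "complex poly poly poly"
  assumes irr: "irreducible F" and dF: "degree F \<noteq> 0"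
    and ij: "i \<noteq> j" and ik: "i \<noteq> k" and jk: "j \<noteq> k" and i6: "i < 6" and j6: "j < 6" and k6: "k < 6"
    and ne: "Z \<noteq> {}" and vF: "van Z (\<lambda>v. eval3 F (v!i) (v!j) (v!k))"
  shows "alg Z {i,j} k \<or> (alg Z {} i \<and> alg Z {i} j)"
proof (cases "\<exists>l\<le>degree F. \<not> van Z (\<lambda>v. evxy (coeff F l) (v!i) (v!j))")
  case True
  have "alg Z {i,j} k"
  proof (rule alg_introx[of "{i,j}" "degree F" "\<lambda>l v. evxy (coeff F l) (v!i) (v!j)"])
    show "\<forall>l\<le>degree F. inSx {i,j} (\<lambda>v. evxy (coeff F l) (v!i) (v!j))"
      using inSx_evxy i6 j6 by auto
    show "\<forall>v\<in>Z. (\<Sum>l\<le>degree F. evxy (coeff F l) (v!i) (v!j) * (v!k)^l) = 0"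
      using vF unfolding van_def by (simp add: eval3_expand)
  qed (use True in auto)
  then show ?thesis by blast
next
  case False
  have allv: "van Z (\<lambda>v. evxy (coeff F l) (v!i) (v!j))" for l
  proof (cases "l \<le> degree F")
    case True then show ?thesis using False by auto
  next
    case False then have "coeff F l = 0" by (simp add: coeff_eq_0)
    then show ?thesis unfolding van_def evxy_def by simp
  qed
  define S where "S = coeff F ` {..degree F}"
  have fS: "finite S" unfolding S_def by simp
  have nzS: "\<exists>f\<in>S. f \<noteq> 0" unfolding S_def using dF
    by (intro bexI[of _ "coeff F (degree F)"]) (auto simp: leading_coeff_0_iff)
  have copS: "\<forall>d. (\<forall>f\<in>S. d dvd f) \<longrightarrow> is_unit d"
  proof (intro allI impI)
    fix d assume d: "\<forall>f\<in>S. d dvd f"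
    have "\<forall>l. d dvd coeff F l"
    proof
      fix l show "d dvd coeff F l"
      proof (cases "l \<le> degree F")
        case True then show ?thesis using d unfolding S_def by auto
      next
        case False then show ?thesis by (simp add: coeff_eq_0)
      qed
    qed
    then show "is_unit d" by (rule content_unit[OF irr dF])
  qed
  obtain lam r where lr: "r \<noteq> 0" "(\<Sum>f\<in>S. lam f * f) = [:r:]" using CD[OF fS nzS copS] by blast
  have "van Z (\<lambda>v. poly r (v!i))"
    unfolding van_def
  proof
    fix v assume v: "v \<in> Z"
    have "poly r (v!i) = evxy [:r:] (v!i) (v!j)" by (simp add: evxy_const)
    also have "\<dots> = (\<Sum>f\<in>S. evxy (lam f) (v!i) (v!j) * evxy f (v!i) (v!j))"
      by (simp add: lr(2)[symmetric] evxy_sum evxy_mult)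
    also have "\<dots> = 0"
    proof (rule sum.neutral, rule ballI)
      fix f assume "f \<in> S"
      then obtain l where "f = coeff F l" unfolding S_def by blast
      then have "evxy f (v!i) (v!j) = 0" using allv[of l] v unfolding van_def by auto
      then show "evxy (lam f) (v!i) (v!j) * evxy f (v!i) (v!j) = 0" by simp
    qed
    finally show "poly r (v!i) = 0" .
  qed
  then have a0: "alg Z {} i" using Gx lr(1) i6 ne by blast
  have a1: "alg Z {i} j"
  proof (cases "\<exists>l t. t \<le> degree (coeff F l) \<and> \<not> van Z (\<lambda>v. poly (coeff (coeff F l) t) (v!i))")
    case True
    then obtain l t where lt: "t \<le> degree (coeff F l)" "\<not> van Z (\<lambda>v. poly (coeff (coeff F l) t) (v!i))" by blast
    show ?thesis
    proof (rule alg_introx[of "{i}" "degree (coeff F l)" "\<lambda>t v. poly (coeff (coeff F l) t) (v!i)"])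
      show "\<forall>t\<le>degree (coeff F l). inSx {i} (\<lambda>v. poly (coeff (coeff F l) t) (v!i))"
        using inSx_poly i6 by auto
      show "\<exists>t\<le>degree (coeff F l). \<not> van Z (\<lambda>v. poly (coeff (coeff F l) t) (v!i))" using lt by blast
      show "\<forall>v\<in>Z. (\<Sum>t\<le>degree (coeff F l). poly (coeff (coeff F l) t) (v!i) * (v!j)^t) = 0"
        using allv[of l] unfolding van_def by (simp add: evxy_expand)
    qed simp
  next
    case False
    have allc: "van Z (\<lambda>v. poly (coeff (coeff F l) t) (v!i))" for l t
    proof (cases "t \<le> degree (coeff F l)")
      case True then show ?thesis using False by auto
    next
      case False then have "coeff (coeff F l) t = 0" by (simp add: coeff_eq_0)
      then show ?thesis unfolding van_def by simp
    qed
    define N where "N = (\<Sum>l\<le>degree F. degree (coeff F l))"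
    define S' where "S' = (\<lambda>lt. coeff (coeff F (fst lt)) (snd lt)) ` ({..degree F} \<times> {..N})"
    have fS': "finite S'" unfolding S'_def by simp
    have degle: "degree (coeff F l) \<le> N" if "l \<le> degree F" for l
      unfolding N_def using that by (intro member_le_sum) auto
    have nzS': "\<exists>f\<in>S'. f \<noteq> 0"
    proof -
      have "coeff F (degree F) \<noteq> 0" using dF by (auto simp: leading_coeff_0_iff)
      then have "coeff (coeff F (degree F)) (degree (coeff F (degree F))) \<noteq> 0" by simp
      moreover have "coeff (coeff F (degree F)) (degree (coeff F (degree F))) \<in> S'"
        unfolding S'_def using degle[of "degree F"]
        by (intro image_eqI[of _ _ "(degree F, degree (coeff F (degree F)))"]) auto
      ultimately show ?thesis by blast
    qed
    have copS': "\<forall>d. (\<forall>f\<in>S'. d dvd f) \<longrightarrow> is_unit d"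
    proof (intro allI impI)
      fix d assume d: "\<forall>f\<in>S'. d dvd f"
      have dd: "d dvd coeff (coeff F l) t" for l t
      proof (cases "l \<le> degree F \<and> t \<le> N")
        case True
        then have "coeff (coeff F l) t \<in> S'" unfolding S'_def by (intro image_eqI[of _ _ "(l,t)"]) auto
        then show ?thesis using d by blast
      next
        case False
        have "coeff (coeff F l) t = 0"
        proof (cases "l \<le> degree F")
          case False then show ?thesis by (simp add: coeff_eq_0)
        next
          case True
          then have "degree (coeff F l) < t" using degle[of l] \<open>\<not> (l \<le> degree F \<and> t \<le> N)\<close> by simp
          then show ?thesis by (simp add: coeff_eq_0)
        qed
        then show ?thesis by simp
      qed
      have "\<forall>l. [:d:] dvd coeff F l" using dd const_poly_dvd_iff by blast
      then have "is_unit [:d:]" by (rule content_unit[OF irr dF])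
      then show "is_unit d" by (simp add: is_unit_const_poly_iff)
    qed
    obtain lam' r' where lr': "r' \<noteq> 0" "(\<Sum>f\<in>S'. lam' f * f) = [:r':]" using CD[OF fS' nzS' copS'] by blast
    obtain v where v: "v \<in> Z" using ne by blast
    have "r' = poly [:r':] (v!i)" by simp
    also have "\<dots> = (\<Sum>f\<in>S'. poly (lam' f) (v!i) * poly f (v!i))"
      by (simp add: lr'(2)[symmetric] poly_sum)
    also have "\<dots> = 0"
    proof (rule sum.neutral, rule ballI)
      fix f assume "f \<in> S'"
      then obtain l t where "f = coeff (coeff F l) t" unfolding S'_def by auto
      then have "poly f (v!i) = 0" using allc[of l t] v unfolding van_def by auto
      then show "poly (lam' f) (v!i) * poly f (v!i) = 0" by simp
    qed
    finally show ?thesis using lr'(1) by simp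
  qed
  show ?thesis using a0 a1 by blast
qed

lemma six: "{..<6::nat} = {0,1,2,3,4,5}"
  by (auto simp: lessThan_Suc numeral_eq_Suc)

lemma step3:
  assumes pr: "prime_set Z" and T0: "T0 \<subseteq> {..<6}" "card T0 = 3"
    and u: "u1 \<notin> T0" "u2 \<notin> insert u1 T0" "u3 \<notin> insert u2 (insert u1 T0)" "u1 < 6" "u2 < 6" "u3 < 6"
    and a1: "alg Z S1 u1" "S1 \<subseteq> T0"
    and a2: "alg Z S2 u2" "S2 \<subseteq> insert u1 T0"
    and a3: "alg Z S3 u3" "S3 \<subseteq> insert u2 (insert u1 T0)"
    and all: "insert u3 (insert u2 (insert u1 T0)) = {..<6}"
  shows "Good Z {..<6} 3"
proof -
  have ne: "Z \<noteq> {}" using pr unfolding prime_set_def by blast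
  have f0: "finite T0" using T0(1) finite_subset by blast
  have g0: "Good Z T0 3" using Good_base[OF T0(1) ne] T0(2) by simp
  have g1: "Good Z (insert u1 T0) 3"
    by (rule Good_step[OF pr T0(1) u(4) u(1) alg_mono[OF a1 f0] g0])
  have T1: "insert u1 T0 \<subseteq> {..<6}" using T0 u by auto
  have g2: "Good Z (insert u2 (insert u1 T0)) 3"
    by (rule Good_step[OF pr T1 u(5) u(2) alg_mono[OF a2] g1]) (use f0 in simp)
  have T2: "insert u2 (insert u1 T0) \<subseteq> {..<6}" using T1 u by auto
  have g3: "Good Z (insert u3 (insert u2 (insert u1 T0))) 3"
    by (rule Good_step[OF pr T2 u(6) u(3) alg_mono[OF a3] g2]) (use f0 in simp)
  then show ?thesis using all by simp
qed

lemma comb: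
  assumes pr: "prime_set Z"
    and B1: "alg Z {0,1} 2 \<or> (alg Z {} 0 \<and> alg Z {0} 1)"
    and B2: "alg Z {3,4} 5 \<or> (alg Z {} 3 \<and> alg Z {3} 4)"
    and X: "alg Z {} 0 \<or> alg Z {0} 1 \<or> alg Z {} 3 \<or> alg Z {3} 4 \<or> alg Z {0} 4 \<or> alg Z {3} 1"
  shows "Good Z {..<6} 3"
proof -
  note s3 = step3[OF pr]
  show ?thesis
  proof (cases "alg Z {} 0 \<and> alg Z {0} 1")
    case b1: True
    show ?thesis
    proof (cases "alg Z {3,4} 5")
      case True
      show ?thesis by (rule s3[of "{2,3,4}" 0 1 5 "{}" "{0}" "{3,4}"]) (use b1 True in \<open>auto simp: six\<close>)
    next
      case False
      then have "alg Z {} 3" using B2 by blast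
      show ?thesis by (rule s3[of "{2,4,5}" 0 1 3 "{}" "{0}" "{}"]) (use b1 \<open>alg Z {} 3\<close> in \<open>auto simp: six\<close>)
    qed
  next
    case nb1: False
    then have a2: "alg Z {0,1} 2" using B1 by blast
    show ?thesis
    proof (cases "alg Z {3,4} 5")
      case False
      then have "alg Z {} 3" "alg Z {3} 4" using B2 by blast+
      show ?thesis by (rule s3[of "{0,1,5}" 3 4 2 "{}" "{3}" "{0,1}"]) (use a2 \<open>alg Z {} 3\<close> \<open>alg Z {3} 4\<close> in \<open>auto simp: six\<close>)
    next
      case a5: True
      from X show ?thesis
      proof (elim disjE)
        assume "alg Z {} 0"
        show ?thesis by (rule s3[of "{1,3,4}" 0 2 5 "{}" "{0,1}" "{3,4}"]) (use a2 a5 \<open>alg Z {} 0\<close> in \<open>auto simp: six\<close>)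
      next
        assume "alg Z {0} 1"
        show ?thesis by (rule s3[of "{0,3,4}" 1 2 5 "{0}" "{0,1}" "{3,4}"]) (use a2 a5 \<open>alg Z {0} 1\<close> in \<open>auto simp: six\<close>)
      next
        assume "alg Z {} 3"
        show ?thesis by (rule s3[of "{0,1,4}" 3 2 5 "{}" "{0,1}" "{3,4}"]) (use a2 a5 \<open>alg Z {} 3\<close> in \<open>auto simp: six\<close>)
      next
        assume "alg Z {3} 4"
        show ?thesis by (rule s3[of "{0,1,3}" 4 2 5 "{3}" "{0,1}" "{3,4}"]) (use a2 a5 \<open>alg Z {3} 4\<close> in \<open>auto simp: six\<close>)
      next
        assume "alg Z {0} 4"
        show ?thesis by (rule s3[of "{0,1,3}" 4 2 5 "{0}" "{0,1}" "{3,4}"]) (use a2 a5 \<open>alg Z {0} 4\<close> in \<open>auto simp: six\<close>)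
      next
        assume "alg Z {3} 1"
        show ?thesis by (rule s3[of "{0,3,4}" 1 2 5 "{3}" "{0,1}" "{3,4}"]) (use a2 a5 \<open>alg Z {3} 1\<close> in \<open>auto simp: six\<close>)
      qed
    qed
  qed
qed

definition termG :: "complex poly poly poly \<Rightarrow> complex poly poly \<Rightarrow> fn" where
  "termG G R w = eval3 G (w!0) (w!1) (w!2) * evxy R (w!0) (w!4) * evxy R (w!3) (w!1) * eval3 G (w!3) (w!4) (w!5)"

lemma res_zero:
  assumes "A * F + B * G = [:R:]" "eval3 F a b c = 0" "eval3 G a b c = 0"
  shows "evxy R a b = 0"
proof -
  have "evxy R a b = eval3 [:R:] a b c" by (simp add: eval3_const)
  also have "\<dots> = eval3 A a b c * eval3 F a b c + eval3 B a b c * eval3 G a b c"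
    by (simp add: assms(1)[symmetric] eval3_add eval3_mult)
  finally show ?thesis using assms(2,3) by simp
qed

lemma termG_zero:
  assumes "A * F + B * G = [:R:]"
    and "eval3 F x y z1 = 0" "eval3 F x y' z2 = 0" "eval3 F x' y z3 = 0" "eval3 F x' y' z4 = 0"
    and "eval3 G x y z1 * eval3 G x y' z2 * eval3 G x' y z3 * eval3 G x' y' z4 = 0"
  shows "termG G R [x, y, z1, x', y', z4] = 0"
  using assms res_zero[OF assms(1), of x y' z2] res_zero[OF assms(1), of x' y z3]
  unfolding termG_def by (auto simp: mult_eq_0_iff)

lemma poly_fun_termG: "poly_fun 6 (termG G R)"
proof -
  have "inSx {..<6} (termG G R)" unfolding termG_def[abs_def]
    by (intro inSx_mult inSx_eval3 inSx_evxy) auto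
  then show ?thesis by (rule inSx_poly_fun)
qed

lemma poly_fun_b: "i < 6 \<Longrightarrow> j < 6 \<Longrightarrow> k < 6 \<Longrightarrow> poly_fun 6 (\<lambda>w. eval3 F (w!i) (w!j) (w!k))"
  by (rule inSx_poly_fun[OF inSx_eval3[of "{..<6}"]]) auto

lemma xcase:
  assumes pr: "prime_set Z" and RR: "R \<noteq> 0" and AB: "A * F + B * G = [:R:]"
    and b1: "van Z (\<lambda>w. eval3 F (w!0) (w!1) (w!2))" and b2: "van Z (\<lambda>w. eval3 F (w!3) (w!4) (w!5))"
    and t: "van Z (termG G R)"
  shows "alg Z {} 0 \<or> alg Z {0} 1 \<or> alg Z {} 3 \<or> alg Z {3} 4 \<or> alg Z {0} 4 \<or> alg Z {3} 1"
proof -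
  have ne: "Z \<noteq> {}" using pr unfolding prime_set_def by blast
  define f1 where "f1 = (\<lambda>w. eval3 G (w!0) (w!1) (w!2))"
  define f2 where "f2 = (\<lambda>w. evxy R (w!0) (w!4))"
  define f3 where "f3 = (\<lambda>w. evxy R (w!3) (w!1))"
  define f4 where "f4 = (\<lambda>w. eval3 G (w!3) (w!4) (w!5))"
  have p1: "poly_fun 6 f1" "poly_fun 6 f4" unfolding f1_def f4_def by (auto intro: poly_fun_b)
  have p2: "poly_fun 6 f2" "poly_fun 6 f3" unfolding f2_def f3_def
    by (auto intro!: inSx_poly_fun[OF inSx_evxy[of "{..<6}"]])
  have p12: "poly_fun 6 (\<lambda>w. f1 w * f2 w)" using p1 p2 by (auto intro: poly_fun.pf_mult)
  have p123: "poly_fun 6 (\<lambda>w. f1 w * f2 w * f3 w)" using p12 p2 by (auto intro: poly_fun.pf_mult)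
  have "van Z (\<lambda>w. (f1 w * f2 w * f3 w) * f4 w)" using t unfolding termG_def f1_def f2_def f3_def f4_def by simp
  then have "van Z (\<lambda>w. f1 w * f2 w * f3 w) \<or> van Z f4" using pr p123 p1 unfolding prime_set_def by blast
  then have "(van Z (\<lambda>w. f1 w * f2 w) \<or> van Z f3) \<or> van Z f4" using pr p12 p2 unfolding prime_set_def by blast
  then have "van Z f1 \<or> van Z f2 \<or> van Z f3 \<or> van Z f4" using pr p1 p2 unfolding prime_set_def by blast
  then show ?thesis
  proof (elim disjE)
    assume "van Z f1"
    then have "van Z (\<lambda>w. evxy R (w!0) (w!1))" using b1 res_zero[OF AB] unfolding van_def f1_def by blast
    then show ?thesis using G6[OF RR, of 0 1] ne by auto
  next
    assume "van Z f2"
    then show ?thesis using G6[OF RR, of 0 4] ne unfolding f2_def by auto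
  next
    assume "van Z f3"
    then show ?thesis using G6[OF RR, of 3 1] ne unfolding f3_def by auto
  next
    assume "van Z f4"
    then have "van Z (\<lambda>w. evxy R (w!3) (w!4))" using b2 res_zero[OF AB] unfolding van_def f4_def by blast
    then show ?thesis using G6[OF RR, of 3 4] ne by auto
  qed
qed

theorem lemma3p4:
  fixes F :: "complex poly poly poly"
  assumes "irreducible F"
    and "pd1 F \<noteq> 0" and "pd2 F \<noteq> 0" and "pd3 F \<noteq> 0"
  shows "zariski_dim 6 (zariski_closure 6 (rho ` V0 F)) \<le> 3"
proof -
  note irr = assms(1)
  have dF: "degree F \<noteq> 0" using assms(4) pderiv_eq_0_iff unfolding pd3_def by blast
  obtain A1 B1 R1 where r1: "R1 \<noteq> 0" "A1 * F + B1 * pd1 F = [:R1:]"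
    using resG[OF irr assms(2) ndv1[OF assms(2)]] by blast
  obtain A2 B2 R2 where r2: "R2 \<noteq> 0" "A2 * F + B2 * pd2 F = [:R2:]"
    using resG[OF irr assms(3) ndv2[OF assms(3)]] by blast
  obtain A3 B3 R3 where r3: "R3 \<noteq> 0" "A3 * F + B3 * pd3 F = [:R3:]"
    using resG[OF irr assms(4) ndv3[OF assms(4)]] by blast
  define b1 where "b1 = (\<lambda>w. eval3 F (w!0) (w!1) (w!2))"
  define b2 where "b2 = (\<lambda>w. eval3 F (w!3) (w!4) (w!5))"
  define Q where "Q = (\<lambda>w. termG (pd1 F) R1 w * termG (pd2 F) R2 w * termG (pd3 F) R3 w)"
  define W where "W = {w. length w = 6 \<and> (\<forall>p\<in>{b1, b2, Q}. p w = 0)}"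
  have pb: "poly_fun 6 b1" "poly_fun 6 b2" unfolding b1_def b2_def by (auto intro: poly_fun_b)
  have pQ: "poly_fun 6 Q" unfolding Q_def by (intro poly_fun.pf_mult poly_fun_termG)
  have clW: "zariski_closed 6 W" unfolding zariski_closed_def W_def
    by (rule exI[of _ "{b1, b2, Q}"]) (use pb pQ in auto)
  have subW: "rho ` V0 F \<subseteq> W"
  proof
    fix w assume "w \<in> rho ` V0 F"
    then obtain v where v: "v \<in> V0 F" "w = rho v" by blast
    have "\<exists>x x' y y' z1 z2 z3 z4. v = [x, x', y, y', z1, z2, z3, z4] \<and>
        eval3 F x y z1 = 0 \<and> eval3 F x y' z2 = 0 \<and> eval3 F x' y z3 = 0 \<and> eval3 F x' y' z4 = 0 \<and>
        (\<exists>G\<in>{pd1 F, pd2 F, pd3 F}. eval3 G x y z1 * eval3 G x y' z2 * eval3 G x' y z3 * eval3 G x' y' z4 = 0)"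
      using v(1) unfolding V0_def Vi_def V_def by fastforce
    then obtain x x' y y' z1 z2 z3 z4 where vv: "v = [x, x', y, y', z1, z2, z3, z4]"
      and e: "eval3 F x y z1 = 0" "eval3 F x y' z2 = 0" "eval3 F x' y z3 = 0" "eval3 F x' y' z4 = 0"
      and G: "\<exists>G\<in>{pd1 F, pd2 F, pd3 F}. eval3 G x y z1 * eval3 G x y' z2 * eval3 G x' y z3 * eval3 G x' y' z4 = 0"
      by blast
    have w: "w = [x, y, z1, x', y', z4]" using v(2) vv unfolding rho_def by simp
    have "Q w = 0"
      using G termG_zero[OF r1(2) e] termG_zero[OF r2(2) e] termG_zero[OF r3(2) e]
      unfolding Q_def w by auto
    moreover have "b1 w = 0" "b2 w = 0" using e unfolding b1_def b2_def w by simp_all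
    ultimately show "w \<in> W" unfolding W_def w by simp
  qed
  have clsub: "zariski_closure 6 (rho ` V0 F) \<subseteq> W"
    unfolding zariski_closure_def using clW subW by blast
  show ?thesis
  proof (rule dim_bound)
    fix Z assume irZ: "zariski_irreducible 6 Z" and ZC: "Z \<subseteq> zariski_closure 6 (rho ` V0 F)"
    have pr: "prime_set Z" by (rule irr_prime[OF irZ])
    have ne: "Z \<noteq> {}" using pr unfolding prime_set_def by blast
    have ZW: "Z \<subseteq> W" using ZC clsub by blast
    have vb1: "van Z b1" and vb2: "van Z b2" and vQ: "van Z Q" using ZW unfolding W_def van_def by auto
    have pt: "poly_fun 6 (termG G R)" for G R by (rule poly_fun_termG)
    have pt12: "poly_fun 6 (\<lambda>w. termG (pd1 F) R1 w * termG (pd2 F) R2 w)" by (intro poly_fun.pf_mult pt)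
    have "van Z (\<lambda>w. termG (pd1 F) R1 w * termG (pd2 F) R2 w) \<or> van Z (termG (pd3 F) R3)"
      using pr pt12 pt vQ unfolding prime_set_def Q_def by blast
    then have tt: "van Z (termG (pd1 F) R1) \<or> van Z (termG (pd2 F) R2) \<or> van Z (termG (pd3 F) R3)"
      using pr pt unfolding prime_set_def by blast
    have vb1': "van Z (\<lambda>w. eval3 F (w!0) (w!1) (w!2))" using vb1 unfolding b1_def .
    have vb2': "van Z (\<lambda>w. eval3 F (w!3) (w!4) (w!5))" using vb2 unfolding b2_def .
    have X: "alg Z {} 0 \<or> alg Z {0} 1 \<or> alg Z {} 3 \<or> alg Z {3} 4 \<or> alg Z {0} 4 \<or> alg Z {3} 1"
      using tt xcase[OF pr r1 vb1' vb2'] xcase[OF pr r2 vb1' vb2'] xcase[OF pr r3 vb1' vb2'] by blast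
    have B1: "alg Z {0,1} 2 \<or> (alg Z {} 0 \<and> alg Z {0} 1)"
      by (rule block[OF irr dF _ _ _ _ _ _ ne vb1']) auto
    have B2: "alg Z {3,4} 5 \<or> (alg Z {} 3 \<and> alg Z {3} 4)"
      by (rule block[OF irr dF _ _ _ _ _ _ ne vb2']) auto
    show "Good Z {..<6} 3" by (rule comb[OF pr B1 B2 X])
  qed
qed

end
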